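(* Assume $f$ satisfies (A1), (A2), (A3), (A4) with $k=1$, let $\bar\lambda_1=\lambda+2\tau_1\mathsf D$, and assume $$200\min\{\mu,(\bar\lambda_1\rho_1)^{1/2}\}\,\mathsf D\le\varepsilon.$$ Let $x_0\in X$, $\hat y\in Y$. Run Algorithm 2 with $\gamma_x=\frac{1}{3\bar\lambda_1+\mu^2/\rho_1}$, $\mathsf{Coupled}=\mathbb 1\{\mu\ge(\bar\lambda_1\rho_1)^{1/2}\}$, $\gamma_y=1/\rho_1$ if $\mathsf{Coupled}=1$, and $$T\ge\Big(3+\frac{\mu^2}{\bar\lambda_1\rho_1}\Big)\Big(\frac{700\bar\lambda_1\Delta}{\varepsilon^2}+1\Big)$$ iterations, where $\Delta=\varphi(x_0)-\min_{x\in X}\varphi(x)$. Then the output $x^*\in X$ satisfies $\|\nabla\varphi_{2\bar\lambda_1}(x^* )\|\le\varepsilon$.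
   Context: Let $E_x,E_y$ be finite-dimensional Euclidean spaces with Euclidean norms $\|\cdot\|$ (operator norms for tensors). Let $X\subseteq E_x$, $Y\subseteq E_y$ be convex with nonempty interior, $Y$ compact, $\mathsf D\ge\mathrm{diam}(Y)$. Let $f:X\times Y\to\mathbb R$ and $\varphi(x)=\max_{y\in Y}f(x,y)$. (A1) $\nabla_x f$ exists and $\|\nabla_x f(x',y')-\nabla_x f(x,y)\|\le\lambda\|x'-x\|+\mu\|y'-y\|$ for all $x,x'\in X,y,y'\in Y$ ($\lambda>0,\mu\ge0$). (A2) with $k=1$: $\nabla_y f$ exists and $\|\nabla_y f(x',y')-\nabla_y f(x,y)\|\le\rho_1\|y'-y\|+\sigma_1\|x'-x\|$. (A3) with $k=1$: $\nabla^2_{xy}f$ exists and $\|\nabla^2_{xy}f(x',y)-\nabla^2_{xy}f(x,y)\|\le\tau_1\|x'-x\|$. (A4) with $k=1$: with $Y'_x$ the set of $y\in Y$ at which the third-order partial derivative tensor $\nabla^3_{xxy}f(x,y)$ does not exist, the set $\{(x,y):x\in X,y\in Y'_x\}$ is Lebesgue measurable. For a weakly convex $\phi:X\to\mathbb R$ (i.e. $\phi+\frac{c}{2}\|\cdot\|^2$ convex for some $c<\bar\lambda$), its Moreau envelope is $\phi_{\bar\lambda}(x)=\min_{u\in X}\{\phi(u)+\frac{\bar\lambda}2\|u-x\|^2\}$. $\Pi_X,\Pi_Y$ denote Euclidean projections. Algorithm 2 (input $x_0\in X$, $\hat y\in Y$, $\gamma_x>0$, $T$, $\mathsf{Coupled}\in\{0,1\}$,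 $\gamma_y>0$): set $x^*=x_0$, $\varepsilon^*=+\infty$. For $t=0,\dots,T-1$: if $\mathsf{Coupled}=1$, set $y_t=\Pi_Y[\hat y+\gamma_y\nabla_y f(x_t,\hat y)]$ and $\tilde x_{t+1}=x_t-\gamma_x[\nabla_x f(x_t,\hat y)+\nabla^2_{xy}f(x_t,\hat y)(y_t-\hat y)]$; otherwise choose $y_t\in\operatorname{Argmax}_{y\in Y}\langle\nabla_y f(x_t,\hat y),y\rangle$ and set $\tilde x_{t+1}=x_t-\gamma_x\nabla_x f(x_t,y_t)$. Then $x_{t+1}=\Pi_X[\tilde x_{t+1}]$, $\varepsilon_t^2=\frac1{\gamma_x^2}\|\tilde x_{t+1}-x_t\|^2-\frac1{\gamma_x^2}\|\tilde x_{t+1}-x_{t+1}\|^2$, and if $\varepsilon_t<\varepsilon^*$ set $x^*=x_t$, $\varepsilon^*=\varepsilon_t$. Output $x^*$. *)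

theory Defs
  imports "HOL-Analysis.Analysis"
begin

text \<open>phi(x) = max over y in Y of f(x,y) (the max exists under the standing assumptions).\<close>
definition max_fun :: "('a \<Rightarrow> 'b \<Rightarrow> real) \<Rightarrow> 'b set \<Rightarrow> 'a \<Rightarrow> real" where
  "max_fun f Y x = (SUP y\<in>Y. f x y)"

definition moreau_env :: "('a::real_normed_vector \<Rightarrow> real) \<Rightarrow> 'a set \<Rightarrow> real \<Rightarrow> 'a \<Rightarrow> real" where
  "moreau_env phi X l x = (INF u\<in>X. phi u + l / 2 * (norm (u - x))\<^sup>2)"

definition is_proj :: "'a::real_normed_vector set \<Rightarrow> 'a \<Rightarrow> 'a \<Rightarrow> bool" where
  "is_proj S z p \<longleftrightarrow> p \<in> S \<and> (\<forall>q\<in>S. norm (z - p) \<le> norm (z - q))"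

definition alg2_eps :: "real \<Rightarrow> (nat \<Rightarrow> 'a::real_normed_vector) \<Rightarrow> (nat \<Rightarrow> 'a) \<Rightarrow> nat \<Rightarrow> real" where
  "alg2_eps gx xs xt t =
     sqrt ((norm (xt (Suc t) - xs t))\<^sup>2 / gx\<^sup>2 - (norm (xt (Suc t) - xs (Suc t)))\<^sup>2 / gx\<^sup>2)"

text \<open>Output of Algorithm 2: the first iterate x_t (t < T) at which eps_t is minimal
  (strict-improvement rule with eps* initialised to +infinity); x_0 if T = 0.\<close>
definition alg2_output :: "real \<Rightarrow> nat \<Rightarrow> (nat \<Rightarrow> 'a::real_normed_vector) \<Rightarrow> (nat \<Rightarrow> 'a) \<Rightarrow> 'a" where
  "alg2_output gx T xs xt =
     (if T = 0 then xs 0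
      else xs (LEAST t. t < T \<and> (\<forall>s<T. alg2_eps gx xs xt t \<le> alg2_eps gx xs xt s)))"

text \<open>A run of Algorithm 2: xs t = x_t, ys t = y_t, xt (t+1) = tilde x_(t+1).
  gx_f, gy_f are the partial gradients of f, Hxy the mixed second derivative.\<close>
definition alg2_run ::
  "'a::euclidean_space set \<Rightarrow> 'b::euclidean_space set \<Rightarrow>
   ('a \<Rightarrow> 'b \<Rightarrow> 'a) \<Rightarrow> ('a \<Rightarrow> 'b \<Rightarrow> 'b) \<Rightarrow> ('a \<Rightarrow> 'b \<Rightarrow> ('b \<Rightarrow>\<^sub>L 'a)) \<Rightarrow>
   'a \<Rightarrow> 'b \<Rightarrow> real \<Rightarrow> nat \<Rightarrow> bool \<Rightarrow> real \<Rightarrow>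
   (nat \<Rightarrow> 'a) \<Rightarrow> (nat \<Rightarrow> 'b) \<Rightarrow> (nat \<Rightarrow> 'a) \<Rightarrow> bool" where
  "alg2_run X Y gx_f gy_f Hxy x0 yhat gam_x T coupled gam_y xs ys xt \<longleftrightarrow>
     xs 0 = x0 \<and>
     (\<forall>t<T.
        (if coupled then
           is_proj Y (yhat + gam_y *\<^sub>R gy_f (xs t) yhat) (ys t) \<and>
           xt (Suc t) = xs t - gam_x *\<^sub>R (gx_f (xs t) yhat + blinfun_apply (Hxy (xs t) yhat) (ys t - yhat))
         else
           ys t \<in> Y \<and> (\<forall>y\<in>Y. inner (gy_f (xs t) yhat) y \<le> inner (gy_f (xs t) yhat) (ys t)) \<and>
           xt (Suc t) = xs t - gam_x *\<^sub>R gx_f (xs t) (ys t)) \<and>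
        is_proj X (xt (Suc t)) (xs (Suc t)))"

end

theory Submission
  imports Defs
begin


lemma proj_vi:
  fixes S :: "'a::real_inner set"
  assumes "convex S" "is_proj S z p" "q \<in> S"
  shows "inner (z - p) (q - p) \<le> 0"
proof (rule ccontr)
  assume "\<not> ?thesis"
  then obtain u where u: "u>0" "u\<le>1" "dist (p + u *\<^sub>R (q - p)) z < dist p z"
    using closer_point_lemma[of z p q] by auto
  let ?w = "(1 - u) *\<^sub>R p + u *\<^sub>R q"
  have "p \<in> S" using assms(2) unfolding is_proj_def by auto
  have "?w \<in> S"
    using convexD_alt[OF assms(1) \<open>p\<in>S\<close> assms(3), of u] using u by auto
  then have "norm (z - p) \<le> norm (z - ?w)" using assms(2) unfolding is_proj_def by auto
  then show False
    using u(3) by (auto simp: dist_norm norm_minus_commute algebra_simps)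
qed

lemma quad_bound:
  fixes F :: "'a::real_inner \<Rightarrow> real"
  assumes S: "convex S"
    and der: "\<And>x. x \<in> S \<Longrightarrow> (F has_derivative (\<lambda>h. inner (G x) h)) (at x within S)"
    and lip: "\<And>x x'. x \<in> S \<Longrightarrow> x' \<in> S \<Longrightarrow> norm (G x' - G x) \<le> K * norm (x' - x)"
    and u: "u \<in> S" and v: "v \<in> S"
  shows "\<bar>F v - F u - inner (G u) (v - u)\<bar> \<le> K / 2 * (norm (v - u))\<^sup>2"
proof -
  define l where "l = (\<lambda>s::real. u + s *\<^sub>R (v - u))"
  have lS: "l s \<in> S" if "s \<in> {0..1}" for s
    using convexD_alt[OF S u v, of s] that by (auto simp: l_def algebra_simps)
  have dl: "\<And>s. (l has_derivative (\<lambda>t. t *\<^sub>R (v - u))) (at s within {0..1})"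
    unfolding l_def by (auto intro!: derivative_eq_intros)
  have dF: "((\<lambda>s. F (l s)) has_derivative (\<lambda>t. inner (G (l s)) (t *\<^sub>R (v - u)))) (at s within {0..1})"
    if "s \<in> {0..1}" for s
    by (rule has_derivative_in_compose2[of S F "\<lambda>x h. inner (G x) h", OF der _ that dl])
       (use lS in auto)
  have Kn: "K \<ge> 0 \<or> v = u"
  proof (cases "v = u")
    case False
    have "0 \<le> norm (G v - G u)" by simp
    also have "\<dots> \<le> K * norm (v - u)" using lip[OF u v] .
    finally show ?thesis using False by (simp add: zero_le_mult_iff)
  qed simp
  define c where "c = (norm (v - u))\<^sup>2"
  have up: "F v - F u - inner (G u) (v - u) \<le> K / 2 * c"
  proof -
    define h where "h = (\<lambda>s. F (l s) - s * inner (G u) (v - u) - K / 2 * s\<^sup>2 * c)"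
    have dh: "(h has_derivative (\<lambda>t. inner (G (l s)) (t *\<^sub>R (v - u)) - t * inner (G u) (v - u) - t * (K * s * c))) (at s within {0..1})"
      if "s \<in> {0..1}" for s
      unfolding h_def
      by (rule derivative_eq_intros dF[OF that] refl | simp add: power2_eq_square algebra_simps)+
    obtain s where s: "s \<in> {0..1}" and eq: "h 1 - h 0 = inner (G (l s)) (1 *\<^sub>R (v - u)) - 1 * inner (G u) (v - u) - 1 * (K * s * c)"
      using mvt_very_simple[of 0 1 h, OF _ dh] by force
    have "inner (G (l s) - G u) (v - u) \<le> norm (G (l s) - G u) * norm (v - u)"
      by (rule norm_cauchy_schwarz)
    also have "\<dots> \<le> K * norm (l s - u) * norm (v - u)"
      by (rule mult_right_mono[OF lip[OF u lS[OF s]]]) simp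
    also have "\<dots> = K * s * c" using s by (simp add: l_def c_def power2_eq_square)
    finally have "h 1 - h 0 \<le> 0" using eq by (simp add: inner_diff_left)
    then show ?thesis by (simp add: h_def l_def)
  qed
  have lo: "F v - F u - inner (G u) (v - u) \<ge> - (K / 2 * c)"
  proof -
    define h where "h = (\<lambda>s. F (l s) - s * inner (G u) (v - u) + K / 2 * s\<^sup>2 * c)"
    have dh: "(h has_derivative (\<lambda>t. inner (G (l s)) (t *\<^sub>R (v - u)) - t * inner (G u) (v - u) + t * (K * s * c))) (at s within {0..1})"
      if "s \<in> {0..1}" for s
      unfolding h_def
      by (rule derivative_eq_intros dF[OF that] refl | simp add: power2_eq_square algebra_simps)+
    obtain s where s: "s \<in> {0..1}" and eq: "h 1 - h 0 = inner (G (l s)) (1 *\<^sub>R (v - u)) - 1 * inner (G u) (v - u) + 1 * (K * s * c)"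
      using mvt_very_simple[of 0 1 h, OF _ dh] by force
    have "- inner (G (l s) - G u) (v - u) \<le> norm (G (l s) - G u) * norm (v - u)"
      using norm_cauchy_schwarz[of "G u - G (l s)" "v - u"]
      by (simp add: norm_minus_commute inner_diff_left)
    also have "\<dots> \<le> K * norm (l s - u) * norm (v - u)"
      by (rule mult_right_mono[OF lip[OF u lS[OF s]]]) simp
    also have "\<dots> = K * s * c" using s by (simp add: l_def c_def power2_eq_square)
    finally have "h 1 - h 0 \<ge> 0" using eq by (simp add: inner_diff_left)
    then show ?thesis by (simp add: h_def l_def)
  qed
  show ?thesis using up lo unfolding c_def by linarith
qed



lemma sqnorm_shift:
  fixes u x h :: "'a::real_inner"
  shows "(norm (u - (x + h)))\<^sup>2 = (norm (u - x))\<^sup>2 - 2 * inner (u - x) h + (norm h)\<^sup>2"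
  by (simp add: power2_norm_eq_inner algebra_simps inner_diff_left inner_diff_right inner_add_left inner_add_right inner_commute)

lemma sqnorm_mid:
  fixes u v z :: "'a::real_inner"
  shows "(norm (midpoint u v - z))\<^sup>2 = ((norm (u - z))\<^sup>2 + (norm (v - z))\<^sup>2) / 2 - (norm (u - v))\<^sup>2 / 4"
  by (simp add: midpoint_def power2_norm_eq_inner algebra_simps inner_diff_left inner_diff_right inner_add_left inner_add_right inner_commute field_simps)

lemma deriv_from_quad:
  fixes F :: "'a::real_inner \<Rightarrow> real"
  assumes "\<And>h. \<bar>F (x + h) - F x - inner g h\<bar> \<le> C * (norm h)\<^sup>2"
  shows "(F has_derivative (\<lambda>h. inner g h)) (at x)"
  unfolding has_derivative_iff_norm
proof
  show "bounded_linear (inner g)" by (rule bounded_linear_inner_right)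
  have ev: "\<forall>\<^sub>F y in at x. norm (norm (F y - F x - inner g (y - x)) / norm (y - x)) \<le> C * norm (y - x)"
  proof (rule always_eventually, intro allI)
    fix y
    have "\<bar>F y - F x - inner g (y - x)\<bar> \<le> C * (norm (y - x))\<^sup>2"
      using assms[of "y - x"] by simp
    then show "norm (norm (F y - F x - inner g (y - x)) / norm (y - x)) \<le> C * norm (y - x)"
      by (cases "y = x") (auto simp: divide_le_eq power2_eq_square mult.assoc)
  qed
  have "((\<lambda>y. C * norm (y - x)) \<longlongrightarrow> C * norm (x - x)) (at x)"
    by (intro tendsto_intros)
  then have "((\<lambda>y. C * norm (y - x)) \<longlongrightarrow> 0) (at x)" by simp
  then show "((\<lambda>y. norm (F y - F x - inner g (y - x)) / norm (y - x)) \<longlongrightarrow> 0) (at x)"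
    by (rule Lim_null_comparison[OF ev])
qed



lemma moreau_prox:
  fixes phi :: "'a::euclidean_space \<Rightarrow> real"
  assumes X: "convex X" "X \<noteq> {}"
    and bdd: "bdd_below (phi ` X)"
    and wc: "\<And>u v. u \<in> X \<Longrightarrow> v \<in> X \<Longrightarrow>
               phi (midpoint u v) \<le> (phi u + phi v) / 2 + c / 8 * (norm (u - v))\<^sup>2"
    and kap: "c < l" "0 < l"
  shows "\<exists>P w. (\<forall>n. w n \<in> X \<and> phi (w n) + l / 2 * (norm (w n - z))\<^sup>2
                     \<le> moreau_env phi X l z + inverse (real (Suc n)))
           \<and> w \<longlonglongrightarrow> P
           \<and> (\<forall>v\<in>X. phi v + l / 2 * (norm (v - z))\<^sup>2 \<ge> moreau_env phi X l z + (l - c) / 4 * (norm (P - v))\<^sup>2)"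
proof -
  define V where "V = (\<lambda>u. phi u + l / 2 * (norm (u - z))\<^sup>2)"
  define e where "e = moreau_env phi X l z"
  define k where "k = l - c"
  have k: "k > 0" using kap by (simp add: k_def)
  have e_def': "e = (INF u\<in>X. V u)" unfolding e_def moreau_env_def V_def ..
  obtain m where m: "\<And>u. u \<in> X \<Longrightarrow> m \<le> phi u" using bdd unfolding bdd_below_def by auto
  have Vge: "m \<le> V u" if "u \<in> X" for u
  proof -
    have "0 \<le> l / 2 * (norm (u - z))\<^sup>2" using kap by simp
    then show ?thesis using m[OF that] by (simp add: V_def)
  qed
  have bV: "bdd_below (V ` X)"
    unfolding bdd_below_def using Vge by auto
  have eV: "e \<le> V u" if "u \<in> X" for u
    unfolding e_def' by (rule cINF_lower[OF bV that])
  have approx: "\<exists>u\<in>X. V u < e + d" if "d > 0" for d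
  proof -
    have "(INF u\<in>X. V u) < e + d" using that e_def' by simp
    then show ?thesis using cINF_less_iff[OF X(2) bV] by auto
  qed
  have sc: "V (midpoint u v) \<le> (V u + V v) / 2 - k / 8 * (norm (u - v))\<^sup>2"
    if "u \<in> X" "v \<in> X" for u v
  proof -
    have "l / 2 * (norm (midpoint u v - z))\<^sup>2 = l / 2 * (((norm (u - z))\<^sup>2 + (norm (v - z))\<^sup>2) / 2 - (norm (u - v))\<^sup>2 / 4)"
      by (simp add: sqnorm_mid)
    also have "\<dots> = (l / 2 * (norm (u - z))\<^sup>2 + l / 2 * (norm (v - z))\<^sup>2) / 2 - l / 8 * (norm (u - v))\<^sup>2"
      by (simp add: algebra_simps)
    finally have eq: "l / 2 * (norm (midpoint u v - z))\<^sup>2 = (l / 2 * (norm (u - z))\<^sup>2 + l / 2 * (norm (v - z))\<^sup>2) / 2 - l / 8 * (norm (u - v))\<^sup>2" .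
    have "k / 8 * (norm (u - v))\<^sup>2 = l / 8 * (norm (u - v))\<^sup>2 - c / 8 * (norm (u - v))\<^sup>2"
      by (simp add: k_def diff_divide_distrib left_diff_distrib)
    then show ?thesis using wc[OF that] eq unfolding V_def by (simp add: field_simps)
  qed
  have midX: "midpoint u v \<in> X" if "u \<in> X" "v \<in> X" for u v
    using convexD[OF X(1) that, of "1/2" "1/2"] that by (simp add: midpoint_def scaleR_add_right)
  have key: "V v \<ge> e - d + k / 4 * (norm (u - v))\<^sup>2"
    if "u \<in> X" "v \<in> X" "V u \<le> e + d" for u v d
  proof -
    have "e \<le> V (midpoint u v)" by (rule eV[OF midX[OF that(1,2)]])
    moreover obtain q where q: "k / 8 * (norm (u - v))\<^sup>2 = q" by blast
    moreover obtain M where M: "V (midpoint u v) = M" by blast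
    ultimately have "e - d + 2 * q \<le> V v" using sc[OF that(1,2)] that(3) by (simp only: q M) argo
    moreover have "k / 4 * (norm (u - v))\<^sup>2 = 2 * q" using q[symmetric] by simp
    ultimately show ?thesis by simp
  qed
  define dl where "dl = (\<lambda>n::nat. inverse (real (Suc n)))"
  have dl_pos: "dl n > 0" for n by (simp add: dl_def)
  have dl0: "dl \<longlonglongrightarrow> 0" unfolding dl_def by (rule LIMSEQ_inverse_real_of_nat)
  have "\<forall>n. \<exists>u. u \<in> X \<and> V u \<le> e + dl n"
    using approx[OF dl_pos] by (meson less_imp_le)
  then obtain w where w: "\<And>n. w n \<in> X" "\<And>n. V (w n) \<le> e + dl n" by metis
  have cd: "(norm (w n - w p))\<^sup>2 \<le> 4 / k * (dl n + dl p)" for n p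
  proof -
    have "V (w p) \<ge> e - dl n + k / 4 * (norm (w n - w p))\<^sup>2"
      by (rule key[OF w(1) w(1) w(2)])
    with w(2)[of p] have "k / 4 * (norm (w n - w p))\<^sup>2 \<le> dl n + dl p" by linarith
    with k show ?thesis by (simp add: field_simps)
  qed
  have "Cauchy w"
  proof (rule metric_CauchyI)
    fix r :: real assume r: "r > 0"
    obtain N where N: "\<And>n. n \<ge> N \<Longrightarrow> dl n < k * r\<^sup>2 / 8"
    proof -
      have "k * r\<^sup>2 / 8 > 0" using k r by simp
      from order_tendstoD(2)[OF dl0 this] obtain N where "\<forall>n\<ge>N. dl n < k * r\<^sup>2 / 8"
        unfolding eventually_sequentially by auto
      then show ?thesis using that by auto
    qed
    show "\<exists>M. \<forall>m\<ge>M. \<forall>n\<ge>M. dist (w m) (w n) < r"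
    proof (intro exI allI impI)
      fix n p assume "n \<ge> N" "p \<ge> N"
      have "(dist (w n) (w p))\<^sup>2 \<le> 4 / k * (dl n + dl p)" using cd by (simp add: dist_norm)
      also have "\<dots> < 4 / k * (k * r\<^sup>2 / 8 + k * r\<^sup>2 / 8)"
        using N[OF \<open>n \<ge> N\<close>] N[OF \<open>p \<ge> N\<close>] k by (intro mult_strict_left_mono) auto
      also have "\<dots> = r\<^sup>2" using k by (simp add: field_simps)
      finally show "dist (w n) (w p) < r"
        using r power2_less_imp_less[of "dist (w n) (w p)" r] by simp
    qed
  qed
  then obtain P where P: "w \<longlonglongrightarrow> P" using Cauchy_convergent_iff convergent_def by blast
  have P1: "V v \<ge> e + k / 4 * (norm (P - v))\<^sup>2" if v: "v \<in> X" for v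
  proof -
    have "(\<lambda>n. e - dl n + k / 4 * (norm (w n - v))\<^sup>2) \<longlonglongrightarrow> e - 0 + k / 4 * (norm (P - v))\<^sup>2"
      by (intro tendsto_intros dl0 P)
    moreover have "(\<lambda>n. V v) \<longlonglongrightarrow> V v" by simp
    moreover have "\<forall>n. e - dl n + k / 4 * (norm (w n - v))\<^sup>2 \<le> V v"
      using key[OF w(1) v w(2)] by blast
    ultimately show ?thesis
      by (intro LIMSEQ_le[where X="\<lambda>n. e - dl n + k / 4 * (norm (w n - v))\<^sup>2" and Y="\<lambda>n. V v"]) auto
  qed
  show ?thesis
    apply (rule exI[of _ P], rule exI[of _ w])
    using w P P1 unfolding V_def e_def dl_def k_def by auto
qed



lemma moreau_le:
  fixes phi :: "'a::real_normed_vector \<Rightarrow> real"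
  assumes bdd: "bdd_below (phi ` X)" and l: "0 \<le> l" and u: "u \<in> X"
  shows "moreau_env phi X l z \<le> phi u + l / 2 * (norm (u - z))\<^sup>2"
proof -
  obtain m where m: "\<And>u. u \<in> X \<Longrightarrow> m \<le> phi u" using bdd unfolding bdd_below_def by auto
  have "bdd_below ((\<lambda>u. phi u + l / 2 * (norm (u - z))\<^sup>2) ` X)"
    unfolding bdd_below_def
  proof (intro exI ballI)
    fix y assume "y \<in> (\<lambda>u. phi u + l / 2 * (norm (u - z))\<^sup>2) ` X"
    then obtain v where "v \<in> X" "y = phi v + l / 2 * (norm (v - z))\<^sup>2" by auto
    moreover have "0 \<le> l / 2 * (norm (v - z))\<^sup>2" using l by simp
    ultimately show "m \<le> y" using m[of v] by simp
  qed
  then show ?thesis unfolding moreau_env_def by (rule cINF_lower[OF _ u])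
qed

lemma moreau_deriv:
  fixes phi :: "'a::euclidean_space \<Rightarrow> real"
  assumes X: "convex X" "X \<noteq> {}"
    and bdd: "bdd_below (phi ` X)"
    and wc: "\<And>u v. u \<in> X \<Longrightarrow> v \<in> X \<Longrightarrow>
               phi (midpoint u v) \<le> (phi u + phi v) / 2 + c / 8 * (norm (u - v))\<^sup>2"
    and kap: "c < l" "0 < l"
  shows "\<exists>P w. (\<forall>n. w n \<in> X \<and> phi (w n) + l / 2 * (norm (w n - x))\<^sup>2
                     \<le> moreau_env phi X l x + inverse (real (Suc n)))
           \<and> w \<longlonglongrightarrow> P
           \<and> (moreau_env phi X l has_derivative (\<lambda>h. inner (l *\<^sub>R (x - P)) h)) (at x)"
proof -
  define e where "e = moreau_env phi X l"
  define V where "V = (\<lambda>z u. phi u + l / 2 * (norm (u - z))\<^sup>2)"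
  define k where "k = l - c"
  have k: "k > 0" using kap by (simp add: k_def)
  define dl where "dl = (\<lambda>n::nat. inverse (real (Suc n)))"
  have dl0: "dl \<longlonglongrightarrow> 0" unfolding dl_def by (rule LIMSEQ_inverse_real_of_nat)
  have "\<forall>z. \<exists>P w. (\<forall>n. w n \<in> X \<and> V z (w n) \<le> e z + dl n) \<and> w \<longlonglongrightarrow> P
           \<and> (\<forall>v\<in>X. V z v \<ge> e z + k / 4 * (norm (P - v))\<^sup>2)"
    using moreau_prox[OF X bdd wc kap] unfolding V_def e_def dl_def k_def by blast
  then obtain Pf wf where Pw: "\<And>z n. wf z n \<in> X" "\<And>z n. V z (wf z n) \<le> e z + dl n"
      "\<And>z. wf z \<longlonglongrightarrow> Pf z" "\<And>z v. v \<in> X \<Longrightarrow> V z v \<ge> e z + k / 4 * (norm (Pf z - v))\<^sup>2"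
    by metis
  have eV: "e z \<le> V z u" if "u \<in> X" for z u
    unfolding e_def V_def using moreau_le[OF bdd _ that] kap by simp
  have shiftV: "V (z + h) u = V z u - l * inner (u - z) h + l / 2 * (norm h)\<^sup>2" for z h u
    unfolding V_def sqnorm_shift by (simp add: algebra_simps)
  have upper: "e (z + h) \<le> e z + l * inner (z - Pf z) h + l / 2 * (norm h)\<^sup>2" for z h
  proof -
    have le: "e (z + h) \<le> e z + dl n + l * inner (z - wf z n) h + l / 2 * (norm h)\<^sup>2" for n
    proof -
      have "e (z + h) \<le> V (z + h) (wf z n)" by (rule eV[OF Pw(1)])
      also have "\<dots> = V z (wf z n) + l * inner (z - wf z n) h + l / 2 * (norm h)\<^sup>2"
        unfolding shiftV by (simp add: inner_diff_left algebra_simps)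
      finally show ?thesis using Pw(2)[of z n] by linarith
    qed
    have "(\<lambda>n. e z + dl n + l * inner (z - wf z n) h + l / 2 * (norm h)\<^sup>2)
           \<longlonglongrightarrow> e z + 0 + l * inner (z - Pf z) h + l / 2 * (norm h)\<^sup>2"
      by (intro tendsto_intros dl0 Pw(3))
    note limF = this
    have "e (z + h) \<le> e z + 0 + l * inner (z - Pf z) h + l / 2 * (norm h)\<^sup>2"
      by (rule LIMSEQ_le[OF tendsto_const limF]) (use le in auto)
    then show ?thesis by simp
  qed
  have lower: "e (x + h) \<ge> e x + l * inner (x - Pf x) h - (4 * l * l / k) * (norm h)\<^sup>2" for h
  proof -
    define P where "P = Pf x"
    define Q where "Q = Pf (x + h)"
    define w where "w = wf (x + h)"
    have backV: "V x (w n) = V (x + h) (w n) - l * inner (x + h - w n) h + l / 2 * (norm h)\<^sup>2" for n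
    proof -
      have "V x (w n) = V ((x + h) + (- h)) (w n)" by simp
      also have "\<dots> = V (x + h) (w n) - l * inner (w n - (x + h)) (- h) + l / 2 * (norm (-h))\<^sup>2"
        by (rule shiftV)
      finally show ?thesis by (simp add: inner_diff_left inner_minus_right algebra_simps)
    qed
    have L1n: "e x \<le> e (x + h) + dl n - l * inner (x + h - w n) h + l / 2 * (norm h)\<^sup>2" for n
      using eV[OF Pw(1), of x "x + h" n] backV[of n] Pw(2)[of "x + h" n] unfolding w_def by linarith
    have L2n: "k / 4 * (norm (P - w n))\<^sup>2 \<le> l * inner (w n - P) h + dl n" for n
    proof -
      have "e x + k / 4 * (norm (P - w n))\<^sup>2 \<le> V x (w n)"
        unfolding P_def w_def by (rule Pw(4)[OF Pw(1)])
      moreover have "V (x + h) (w n) \<le> e (x + h) + dl n" unfolding w_def by (rule Pw(2))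
      moreover note upper[of x h]
      ultimately have "k / 4 * (norm (P - w n))\<^sup>2 \<le> l * inner (x - P) h + l / 2 * (norm h)\<^sup>2 + dl n
              - l * inner (x + h - w n) h + l / 2 * (norm h)\<^sup>2"
        using backV[of n] unfolding P_def by linarith
      also have "\<dots> = l * inner (w n - P) h + dl n"
        by (simp add: inner_diff_left inner_add_left algebra_simps power2_norm_eq_inner)
      finally show ?thesis .
    qed
    have wQ: "w \<longlonglongrightarrow> Q" unfolding w_def Q_def by (rule Pw(3))
    have L1: "e x \<le> e (x + h) - l * inner (x + h - Q) h + l / 2 * (norm h)\<^sup>2"
    proof -
      have "(\<lambda>n. e (x + h) + dl n - l * inner (x + h - w n) h + l / 2 * (norm h)\<^sup>2)
             \<longlonglongrightarrow> e (x + h) + 0 - l * inner (x + h - Q) h + l / 2 * (norm h)\<^sup>2"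
        by (intro tendsto_intros dl0 wQ)
      note limF = this
      have "e x \<le> e (x + h) + 0 - l * inner (x + h - Q) h + l / 2 * (norm h)\<^sup>2"
        by (rule LIMSEQ_le[OF tendsto_const limF]) (use L1n in auto)
      then show ?thesis by simp
    qed
    have L2: "k / 4 * (norm (P - Q))\<^sup>2 \<le> l * inner (Q - P) h"
    proof -
      have a: "(\<lambda>n. k / 4 * (norm (P - w n))\<^sup>2) \<longlonglongrightarrow> k / 4 * (norm (P - Q))\<^sup>2"
        by (intro tendsto_intros wQ)
      have b: "(\<lambda>n. l * inner (w n - P) h + dl n) \<longlonglongrightarrow> l * inner (Q - P) h + 0"
        by (intro tendsto_intros wQ dl0)
      show ?thesis using LIMSEQ_le[OF a b] L2n by simp
    qed
    have PQ: "norm (P - Q) \<le> 4 * l / k * norm h"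
    proof -
      have "k / 4 * (norm (P - Q))\<^sup>2 \<le> l * (norm (Q - P) * norm h)"
        using L2 norm_cauchy_schwarz[of "Q - P" h] kap by (meson mult_left_mono less_imp_le order_trans)
      then have "k / 4 * (norm (P - Q) * norm (P - Q)) \<le> l * norm h * norm (P - Q)"
        by (simp add: norm_minus_commute power2_eq_square mult_ac)
      then show ?thesis
      proof (cases "norm (P - Q) = 0")
        case False
        then have "norm (P - Q) > 0" by simp
        with \<open>k / 4 * (norm (P - Q) * norm (P - Q)) \<le> l * norm h * norm (P - Q)\<close>
        have "k / 4 * norm (P - Q) \<le> l * norm h"
          by (simp add: mult.assoc[symmetric])
        with k show ?thesis by (simp add: field_simps)
      qed (use k kap in simp)
    qed
    have i1: "inner (Q - P) h \<le> norm (P - Q) * norm h"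
      using norm_cauchy_schwarz[of "Q - P" h] by (simp add: norm_minus_commute)
    have "l * inner (Q - P) h \<le> l * (norm (P - Q) * norm h)"
      using mult_left_mono[OF i1] kap by simp
    moreover have "inner (P - Q) h = - inner (Q - P) h" by (simp add: inner_diff_left)
    ultimately have i2: "l * inner (P - Q) h \<ge> - (l * (norm (P - Q) * norm h))" by simp
    have i3: "l * (norm (P - Q) * norm h) \<le> l * (4 * l / k * norm h * norm h)"
      using PQ kap by (intro mult_left_mono mult_right_mono) auto
    have i4: "l * (4 * l / k * norm h * norm h) = (4 * l * l / k) * (norm h)\<^sup>2"
      by (simp add: power2_eq_square)
    have eq: "l * inner (x + h - Q) h = l * inner (x - P) h + l * inner (P - Q) h + l * (norm h)\<^sup>2"
      by (simp add: inner_diff_left inner_add_left power2_norm_eq_inner algebra_simps)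
    have "0 \<le> l / 2 * (norm h)\<^sup>2" using kap by simp
    then show ?thesis using L1 eq i2 i3 i4 unfolding P_def by linarith
  qed
  define C where "C = l / 2 + 4 * l * l / k"
  have Cq: "\<bar>e (x + h) - e x - inner (l *\<^sub>R (x - Pf x)) h\<bar> \<le> C * (norm h)\<^sup>2" for h
  proof -
    have a: "0 \<le> l / 2 * (norm h)\<^sup>2" "0 \<le> 4 * l * l / k * (norm h)\<^sup>2" using kap k by simp_all
    have c: "C * (norm h)\<^sup>2 = l / 2 * (norm h)\<^sup>2 + 4 * l * l / k * (norm h)\<^sup>2"
      unfolding C_def by (rule distrib_right)
    have u: "e (x + h) - e x - inner (l *\<^sub>R (x - Pf x)) h \<le> l / 2 * (norm h)\<^sup>2"
      using upper[of x h] by simp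
    have lo: "e (x + h) - e x - inner (l *\<^sub>R (x - Pf x)) h \<ge> - (4 * l * l / k * (norm h)\<^sup>2)"
      using lower[of h] by simp
    show ?thesis unfolding abs_le_iff c using u lo a by linarith
  qed
  have "(e has_derivative (\<lambda>h. inner (l *\<^sub>R (x - Pf x)) h)) (at x)"
    by (rule deriv_from_quad[OF Cq])
  moreover have "\<forall>n. wf x n \<in> X \<and> phi (wf x n) + l / 2 * (norm (wf x n - x))\<^sup>2
                     \<le> moreau_env phi X l x + inverse (real (Suc n))"
    using Pw(1,2) unfolding e_def V_def dl_def by blast
  ultimately show ?thesis using Pw(3) unfolding e_def by blast
qed



lemma step_lemma:
  fixes X :: "'a::euclidean_space set"
  assumes X: "convex X" and x: "x \<in> X" and g: "gam > 0"
    and pr: "is_proj X (x - gam *\<^sub>R G) x'"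
    and E: "E = (norm ((x - gam *\<^sub>R G) - x))\<^sup>2 / gam\<^sup>2 - (norm ((x - gam *\<^sub>R G) - x'))\<^sup>2 / gam\<^sup>2"
  shows "E \<ge> 0" "(norm (x' - x))\<^sup>2 \<le> gam\<^sup>2 * E"
    "inner G (x' - x) + (norm (x' - x))\<^sup>2 / (2 * gam) = - (gam * E / 2)"
    "\<And>u. u \<in> X \<Longrightarrow> inner G (u - x) \<ge> - (gam * E / 2) - sqrt E * norm (u - x)"
proof -
  define D where "D = x' - x"
  have x'_eq: "x' = x + D" by (simp add: D_def)
  have e1: "(norm ((x - gam *\<^sub>R G) - x))\<^sup>2 = gam\<^sup>2 * inner G G"
    by (simp add: power2_norm_eq_inner[symmetric] power_mult_distrib norm_minus_commute)
  have e2: "(norm ((x - gam *\<^sub>R G) - x'))\<^sup>2 = gam\<^sup>2 * inner G G + 2 * gam * inner G D + inner D D"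
    unfolding x'_eq power2_norm_eq_inner by (simp add: inner_diff_left inner_diff_right
        inner_add_left inner_add_right inner_commute algebra_simps power2_eq_square)
  have gE: "gam\<^sup>2 * E = - 2 * gam * inner G D - inner D D"
    unfolding E e1 e2 using g by (simp add: field_simps)
  have vi: "inner ((x - gam *\<^sub>R G) - x') (q - x') \<le> 0" if "q \<in> X" for q
    by (rule proj_vi[OF X pr that])
  have vx: "gam * inner G D + inner D D \<le> 0"
    using vi[OF x] unfolding x'_eq
    by (simp add: inner_diff_left inner_diff_right inner_add_left inner_add_right inner_commute algebra_simps)
  have DD: "inner D D = (norm D)\<^sup>2" by (simp add: power2_norm_eq_inner)
  have nD: "(norm D)\<^sup>2 \<le> gam\<^sup>2 * E" using gE vx DD by linarith
  have "0 \<le> gam\<^sup>2 * E" using nD by (meson order_trans zero_le_power2)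
  then show E0: "E \<ge> 0" using g by (simp add: zero_le_mult_iff)
  show "(norm (x' - x))\<^sup>2 \<le> gam\<^sup>2 * E" using nD by (simp add: D_def)
  have "inner G D = - (gam\<^sup>2 * E + inner D D) / (2 * gam)" using gE g by (simp add: field_simps)
  then show "inner G (x' - x) + (norm (x' - x))\<^sup>2 / (2 * gam) = - (gam * E / 2)"
    using g unfolding D_def[symmetric] DD[symmetric] by (simp add: field_simps power2_eq_square)
  fix u assume u: "u \<in> X"
  have v1: "- gam * inner G (u - x) + gam * inner G D - inner D (u - x) + inner D D \<le> 0"
    using vi[OF u] unfolding x'_eq
    by (simp add: inner_diff_left inner_diff_right inner_add_left inner_add_right inner_commute algebra_simps)
  have nDs: "norm D \<le> gam * sqrt E"
  proof -
    have "norm D = sqrt ((norm D)\<^sup>2)" by simp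
    also have "\<dots> \<le> sqrt (gam\<^sup>2 * E)" using nD by (rule real_sqrt_le_mono)
    also have "\<dots> = gam * sqrt E" using g by (simp add: real_sqrt_mult)
    finally show ?thesis .
  qed
  have "inner D (u - x) \<le> norm D * norm (u - x)" by (rule norm_cauchy_schwarz)
  also have "\<dots> \<le> gam * sqrt E * norm (u - x)" using nDs by (simp add: mult_right_mono)
  finally have cs: "inner D (u - x) \<le> gam * sqrt E * norm (u - x)" .
  have "gam * inner G (u - x) \<ge> gam * (- (gam * E / 2) - sqrt E * norm (u - x))"
  proof -
    have h1: "2 * (gam * inner G D) = - (gam\<^sup>2 * E) - inner D D" using gE by (simp add: field_simps)
    have "inner D D \<ge> 0" by simp
    then have "2 * (gam * inner G (u - x)) \<ge> - (gam\<^sup>2 * E) - 2 * (gam * sqrt E * norm (u - x))"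
      using v1 cs h1 by linarith
    then have "gam * inner G (u - x) \<ge> - (gam\<^sup>2 * E / 2) - gam * sqrt E * norm (u - x)"
      by linarith
    then show ?thesis by (simp add: algebra_simps power2_eq_square)
  qed
  then show "inner G (u - x) \<ge> - (gam * E / 2) - sqrt E * norm (u - x)"
    using g by (simp add: mult_le_cancel_left_pos)
qed



lemma one_step:
  fixes X :: "'a::euclidean_space set" and phi Psi :: "'a \<Rightarrow> real"
  assumes X: "convex X" "X \<noteq> {}"
    and bdd: "bdd_below (phi ` X)"
    and wc: "\<And>u v. u \<in> X \<Longrightarrow> v \<in> X \<Longrightarrow>
               phi (midpoint u v) \<le> (phi u + phi v) / 2 + c / 8 * (norm (u - v))\<^sup>2"
    and cL: "c < 2 * L" and L: "L > 0"
    and g: "gam > 0" and Mg: "M * gam \<le> 1" and a: "a \<ge> 0" and b: "b \<ge> 0"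
    and Pp: "\<And>z. z \<in> X \<Longrightarrow> Psi z \<le> phi z \<and> phi z \<le> Psi z + b"
    and x: "x \<in> X" and pr: "is_proj X (x - gam *\<^sub>R G) x'"
    and up: "\<And>z. z \<in> X \<Longrightarrow> Psi z \<le> Psi x + inner G (z - x) + M / 2 * (norm (z - x))\<^sup>2 + a * norm (z - x)"
    and lo: "\<And>z. z \<in> X \<Longrightarrow> Psi z \<ge> Psi x + inner G (z - x) - L / 2 * (norm (z - x))\<^sup>2 - a * norm (z - x)"
    and s: "s = sqrt ((norm ((x - gam *\<^sub>R G) - x))\<^sup>2 / gam\<^sup>2 - (norm ((x - gam *\<^sub>R G) - x'))\<^sup>2 / gam\<^sup>2)"
  shows "x' \<in> X" "Psi x' \<le> Psi x - gam * s\<^sup>2 / 2 + a * gam * s"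
    "\<exists>g. (moreau_env phi X (2 * L) has_derivative (\<lambda>h. inner g h)) (at x) \<and>
         (norm g)\<^sup>2 \<le> 4 * (s + a) * norm g + 8 * L * b + 4 * L * gam * s\<^sup>2"
proof -
  define E where "E = (norm ((x - gam *\<^sub>R G) - x))\<^sup>2 / gam\<^sup>2 - (norm ((x - gam *\<^sub>R G) - x'))\<^sup>2 / gam\<^sup>2"
  note st = step_lemma[OF X(1) x g pr E_def]
  have sE: "s\<^sup>2 = E" "s \<ge> 0" unfolding s E_def[symmetric] using st(1) by simp_all
  have sq: "s = sqrt E" unfolding s E_def ..
  show x'X: "x' \<in> X" using pr unfolding is_proj_def by simp
  have nD: "norm (x' - x) \<le> gam * s"
  proof -
    have "norm (x' - x) = sqrt ((norm (x' - x))\<^sup>2)" by simp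
    also have "\<dots> \<le> sqrt (gam\<^sup>2 * E)" using st(2) by (rule real_sqrt_le_mono)
    also have "\<dots> = gam * s" using g by (simp add: real_sqrt_mult s E_def)
    finally show ?thesis .
  qed
  have Mq: "M / 2 * (norm (x' - x))\<^sup>2 \<le> (norm (x' - x))\<^sup>2 / (2 * gam)"
  proof -
    have "M \<le> 1 / gam" using Mg g by (simp add: field_simps)
    then have "M / 2 * (norm (x' - x))\<^sup>2 \<le> (1 / gam) / 2 * (norm (x' - x))\<^sup>2"
      by (intro mult_right_mono) auto
    then show ?thesis by simp
  qed
  have aD: "a * norm (x' - x) \<le> a * (gam * s)" using mult_left_mono[OF nD a] .
  show "Psi x' \<le> Psi x - gam * s\<^sup>2 / 2 + a * gam * s"
    using up[OF x'X] Mq aD st(3) sE(1) by (simp add: mult.assoc)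
  obtain P w where Pw: "\<And>n. w n \<in> X"
      "\<And>n. phi (w n) + 2 * L / 2 * (norm (w n - x))\<^sup>2 \<le> moreau_env phi X (2 * L) x + inverse (real (Suc n))"
      "w \<longlonglongrightarrow> P" "(moreau_env phi X (2 * L) has_derivative (\<lambda>h. inner ((2 * L) *\<^sub>R (x - P)) h)) (at x)"
    using moreau_deriv[OF X bdd wc cL, of x] L by auto
  have ex: "moreau_env phi X (2 * L) x \<le> phi x"
    using moreau_le[OF bdd _ x, of "2 * L" x] L by simp
  have rn: "L / 2 * (norm (w n - x))\<^sup>2 \<le> (s + a) * norm (w n - x) + b + gam * E / 2 + inverse (real (Suc n))" for n
  proof -
    define r where "r = norm (w n - x)"
    have A: "phi (w n) + L * r\<^sup>2 \<le> phi x + inverse (real (Suc n))" using Pw(2)[of n] ex by (simp add: r_def)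
    have B: "Psi (w n) \<ge> Psi x + inner G (w n - x) - L / 2 * r\<^sup>2 - a * r" using lo[OF Pw(1)] by (simp add: r_def)
    have C: "inner G (w n - x) \<ge> - (gam * E / 2) - s * r" using st(4)[OF Pw(1)] sq by (simp add: r_def)
    have D: "Psi (w n) \<le> phi (w n)" "phi x \<le> Psi x + b" using Pp[OF Pw(1)] Pp[OF x] by auto
    have "L / 2 * r\<^sup>2 = L * r\<^sup>2 - L / 2 * r\<^sup>2" by simp
    then have "L / 2 * r\<^sup>2 \<le> (s + a) * r + b + gam * E / 2 + inverse (real (Suc n))"
      using A B C D by (simp add: algebra_simps)
    then show ?thesis by (simp add: r_def)
  qed
  define R where "R = norm (P - x)"
  have R: "L / 2 * R\<^sup>2 \<le> (s + a) * R + b + gam * E / 2"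
  proof -
    have l1: "(\<lambda>n. L / 2 * (norm (w n - x))\<^sup>2) \<longlonglongrightarrow> L / 2 * R\<^sup>2"
      unfolding R_def by (intro tendsto_intros Pw(3))
    have l2: "(\<lambda>n. (s + a) * norm (w n - x) + b + gam * E / 2 + inverse (real (Suc n)))
               \<longlonglongrightarrow> (s + a) * R + b + gam * E / 2 + 0"
      unfolding R_def by (intro tendsto_intros Pw(3) LIMSEQ_inverse_real_of_nat)
    show ?thesis using LIMSEQ_le[OF l1 l2] rn by simp
  qed
  have ng: "norm ((2 * L) *\<^sub>R (x - P)) = 2 * L * R"
    using L by (simp add: R_def norm_minus_commute)
  have "(2 * L * R)\<^sup>2 = 8 * L * (L / 2 * R\<^sup>2)" by (simp add: power2_eq_square)
  also have "\<dots> \<le> 8 * L * ((s + a) * R + b + gam * E / 2)"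
    using R L by (intro mult_left_mono) auto
  also have "\<dots> = 4 * (s + a) * (2 * L * R) + 8 * L * b + 4 * L * gam * s\<^sup>2"
    using sE by (simp add: algebra_simps)
  finally show "\<exists>g. (moreau_env phi X (2 * L) has_derivative (\<lambda>h. inner g h)) (at x) \<and>
         (norm g)\<^sup>2 \<le> 4 * (s + a) * norm g + 8 * L * b + 4 * L * gam * s\<^sup>2"
    using Pw(4) ng by (intro exI[of _ "(2 * L) *\<^sub>R (x - P)"]) simp
qed



lemma dq_limit:
  fixes F :: "'b::real_normed_vector \<Rightarrow> 'c::real_normed_vector"
  assumes der: "(F has_derivative F') (at y0 within Y)"
    and Y: "convex Y" "y0 \<in> Y" "y0 + v \<in> Y"
  shows "(\<lambda>n. inverse (inverse (real (Suc n))) *\<^sub>R (F (y0 + inverse (real (Suc n)) *\<^sub>R v) - F y0)) \<longlonglongrightarrow> F' v"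
proof -
  define sn where "sn = (\<lambda>n::nat. inverse (real (Suc n)))"
  have sn_pos: "sn n > 0" "sn n \<le> 1" for n by (auto simp: sn_def field_simps)
  have sn0: "sn \<longlonglongrightarrow> 0" unfolding sn_def by (rule LIMSEQ_inverse_real_of_nat)
  have lin: "bounded_linear F'" using der by (rule has_derivative_bounded_linear)
  have inY: "y0 + sn n *\<^sub>R v \<in> Y" for n
  proof -
    have "(1 - sn n) *\<^sub>R y0 + sn n *\<^sub>R (y0 + v) \<in> Y"
      using convexD_alt[OF Y(1) Y(2) Y(3), of "sn n"] sn_pos[of n] by simp
    then show ?thesis by (simp add: algebra_simps)
  qed
  show ?thesis
  proof (cases "v = 0")
    case True
    then show ?thesis using linear_0[OF bounded_linear.linear[OF lin]] by simp
  next
    case False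
    have lim0: "((\<lambda>y. norm (F y - F y0 - F' (y - y0)) / norm (y - y0)) \<longlongrightarrow> 0) (at y0 within Y)"
      using der unfolding has_derivative_iff_norm by simp
    have fl: "filterlim (\<lambda>n. y0 + sn n *\<^sub>R v) (at y0 within Y) sequentially"
      unfolding filterlim_at
    proof
      show "\<forall>\<^sub>F n in sequentially. y0 + sn n *\<^sub>R v \<in> Y \<and> y0 + sn n *\<^sub>R v \<noteq> y0"
        using inY sn_pos False by (auto intro!: always_eventually simp: less_imp_neq[symmetric])
      have "(\<lambda>n. y0 + sn n *\<^sub>R v) \<longlonglongrightarrow> y0 + 0 *\<^sub>R v" by (intro tendsto_intros sn0)
      then show "(\<lambda>n. y0 + sn n *\<^sub>R v) \<longlonglongrightarrow> y0" by simp
    qed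
    have "(\<lambda>n. norm (F (y0 + sn n *\<^sub>R v) - F y0 - F' ((y0 + sn n *\<^sub>R v) - y0)) / norm ((y0 + sn n *\<^sub>R v) - y0)) \<longlonglongrightarrow> 0"
      using filterlim_compose[OF lim0 fl] by simp
    then have "(\<lambda>n. norm v * (norm (F (y0 + sn n *\<^sub>R v) - F y0 - F' ((y0 + sn n *\<^sub>R v) - y0)) / norm ((y0 + sn n *\<^sub>R v) - y0))) \<longlonglongrightarrow> norm v * 0"
      by (intro tendsto_intros)
    moreover have "norm v * (norm (F (y0 + sn n *\<^sub>R v) - F y0 - F' ((y0 + sn n *\<^sub>R v) - y0)) / norm ((y0 + sn n *\<^sub>R v) - y0))
        = norm (inverse (sn n) *\<^sub>R (F (y0 + sn n *\<^sub>R v) - F y0) - F' v)" for n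
    proof -
      define Z where "Z = F (y0 + sn n *\<^sub>R v) - F y0 - sn n *\<^sub>R F' v"
      have "F' (sn n *\<^sub>R v) = sn n *\<^sub>R F' v" using lin by (simp add: linear_simps)
      then have l: "norm v * (norm (F (y0 + sn n *\<^sub>R v) - F y0 - F' ((y0 + sn n *\<^sub>R v) - y0)) / norm ((y0 + sn n *\<^sub>R v) - y0))
          = norm Z / sn n"
        using sn_pos[of n] False by (simp add: Z_def)
      have "inverse (sn n) *\<^sub>R (F (y0 + sn n *\<^sub>R v) - F y0) - F' v = inverse (sn n) *\<^sub>R Z"
        using sn_pos[of n] by (simp add: Z_def algebra_simps)
      then have r: "norm (inverse (sn n) *\<^sub>R (F (y0 + sn n *\<^sub>R v) - F y0) - F' v) = norm Z / sn n"
        using sn_pos[of n] by (simp add: field_simps)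
      show ?thesis using l r by simp
    qed
    ultimately have "(\<lambda>n. norm (inverse (sn n) *\<^sub>R (F (y0 + sn n *\<^sub>R v) - F y0) - F' v)) \<longlonglongrightarrow> 0" by simp
    then have "(\<lambda>n. inverse (sn n) *\<^sub>R (F (y0 + sn n *\<^sub>R v) - F y0)) \<longlonglongrightarrow> F' v"
      using Lim_null tendsto_norm_zero_iff by blast
    then show ?thesis unfolding sn_def .
  qed
qed



lemma model_quad:
  fixes f :: "'a::euclidean_space \<Rightarrow> 'b::euclidean_space \<Rightarrow> real"
    and gx_f :: "'a \<Rightarrow> 'b \<Rightarrow> 'a" and gy_f :: "'a \<Rightarrow> 'b \<Rightarrow> 'b"
    and Hxy :: "'a \<Rightarrow> 'b \<Rightarrow> ('b \<Rightarrow>\<^sub>L 'a)"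
  assumes X: "convex X" and Y: "convex Y" and yh: "yhat \<in> Y" and y: "y \<in> Y"
    and gx: "\<And>x y. x \<in> X \<Longrightarrow> y \<in> Y \<Longrightarrow>
               ((\<lambda>x'. f x' y) has_derivative (\<lambda>h. inner (gx_f x y) h)) (at x within X)"
    and lipx: "\<And>x x' y. x \<in> X \<Longrightarrow> x' \<in> X \<Longrightarrow> y \<in> Y \<Longrightarrow> norm (gx_f x' y - gx_f x y) \<le> lam * norm (x' - x)"
    and gy: "\<And>x. x \<in> X \<Longrightarrow> ((\<lambda>y'. f x y') has_derivative (\<lambda>h. inner (gy_f x yhat) h)) (at yhat within Y)"
    and Hd: "\<And>x y. x \<in> X \<Longrightarrow> y \<in> Y \<Longrightarrow>
               ((\<lambda>y'. gx_f x y') has_derivative blinfun_apply (Hxy x y)) (at y within Y)"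
    and A3: "\<And>x x' y. x \<in> X \<Longrightarrow> x' \<in> X \<Longrightarrow> y \<in> Y \<Longrightarrow> norm (Hxy x' y - Hxy x y) \<le> tau * norm (x' - x)"
    and tau: "tau \<ge> 0"
    and x: "x \<in> X" and x': "x' \<in> X"
  shows "\<bar>(f x' yhat + inner (gy_f x' yhat) (y - yhat)) - (f x yhat + inner (gy_f x yhat) (y - yhat))
          - inner (gx_f x yhat + Hxy x yhat (y - yhat)) (x' - x)\<bar>
         \<le> (lam + tau * norm (y - yhat)) / 2 * (norm (x' - x))\<^sup>2"
proof -
  define v where "v = y - yhat"
  define sn where "sn = (\<lambda>n::nat. inverse (real (Suc n)))"
  have sn_pos: "sn n > 0" "sn n \<le> 1" for n by (auto simp: sn_def field_simps)
  have yv: "yhat + v \<in> Y" using y by (simp add: v_def)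
  have inY: "yhat + sn n *\<^sub>R v \<in> Y" for n
  proof -
    have "(1 - sn n) *\<^sub>R yhat + sn n *\<^sub>R (yhat + v) \<in> Y"
      using convexD_alt[OF Y yh yv, of "sn n"] sn_pos[of n] by simp
    then show ?thesis by (simp add: algebra_simps)
  qed
  define K where "K = lam + tau * norm v"
  define Fn where "Fn = (\<lambda>n z. f z yhat + inverse (sn n) * (f z (yhat + sn n *\<^sub>R v) - f z yhat))"
  define An where "An = (\<lambda>n z. gx_f z yhat + inverse (sn n) *\<^sub>R (gx_f z (yhat + sn n *\<^sub>R v) - gx_f z yhat))"
  have dFn: "(Fn n has_derivative (\<lambda>h. inner (An n z) h)) (at z within X)" if z: "z \<in> X" for n z
  proof -
    have "((\<lambda>z. f z yhat + inverse (sn n) * (f z (yhat + sn n *\<^sub>R v) - f z yhat)) has_derivative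
          (\<lambda>h. inner (gx_f z yhat) h + inverse (sn n) * (inner (gx_f z (yhat + sn n *\<^sub>R v)) h - inner (gx_f z yhat) h)))
          (at z within X)"
      by (intro has_derivative_add has_derivative_mult_right has_derivative_diff gx z yh inY)
    moreover have "(\<lambda>h. inner (gx_f z yhat) h + inverse (sn n) * (inner (gx_f z (yhat + sn n *\<^sub>R v)) h - inner (gx_f z yhat) h))
        = (\<lambda>h. inner (An n z) h)"
      by (rule ext) (simp add: An_def inner_add_left inner_diff_left algebra_simps)
    ultimately show ?thesis unfolding Fn_def by simp
  qed
  have lipA: "norm (An n z' - An n z) \<le> K * norm (z' - z)" if z: "z \<in> X" "z' \<in> X" for n z z'
  proof -
    define Dd where "Dd = (\<lambda>y. gx_f z' y - gx_f z y)"
    have dD: "(Dd has_derivative blinfun_apply (Hxy z' w - Hxy z w)) (at w within Y)" if "w \<in> Y" for w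
    proof -
      have "(Dd has_derivative (\<lambda>h. blinfun_apply (Hxy z' w) h - blinfun_apply (Hxy z w) h)) (at w within Y)"
        unfolding Dd_def by (intro has_derivative_diff Hd z that)
      then show ?thesis by (simp add: minus_blinfun.rep_eq)
    qed
    have bD: "onorm (blinfun_apply (Hxy z' w - Hxy z w)) \<le> tau * norm (z' - z)" if "w \<in> Y" for w
      using A3[OF z(1) z(2) that] by (simp add: norm_blinfun.rep_eq)
    have "norm (Dd (yhat + sn n *\<^sub>R v) - Dd yhat) \<le> tau * norm (z' - z) * norm ((yhat + sn n *\<^sub>R v) - yhat)"
      by (rule differentiable_bound[OF Y dD bD inY yh])
    also have "\<dots> = sn n * (tau * norm (z' - z) * norm v)" using sn_pos[of n] by simp
    finally have nD: "norm (Dd (yhat + sn n *\<^sub>R v) - Dd yhat) \<le> sn n * (tau * norm (z' - z) * norm v)" .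
    have "An n z' - An n z = (gx_f z' yhat - gx_f z yhat) + inverse (sn n) *\<^sub>R (Dd (yhat + sn n *\<^sub>R v) - Dd yhat)"
      by (simp add: An_def Dd_def algebra_simps)
    then have "norm (An n z' - An n z) \<le> norm (gx_f z' yhat - gx_f z yhat) + inverse (sn n) * norm (Dd (yhat + sn n *\<^sub>R v) - Dd yhat)"
      using sn_pos[of n] by (metis norm_triangle_ineq norm_scaleR abs_of_pos positive_imp_inverse_positive)
    also have "\<dots> \<le> lam * norm (z' - z) + inverse (sn n) * (sn n * (tau * norm (z' - z) * norm v))"
      using lipx[OF z(1) z(2) yh] nD sn_pos[of n] by (intro add_mono mult_left_mono) auto
    also have "\<dots> = K * norm (z' - z)" using sn_pos[of n] by (simp add: K_def algebra_simps)
    finally show ?thesis .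
  qed
  have qn: "\<bar>Fn n x' - Fn n x - inner (An n x) (x' - x)\<bar> \<le> K / 2 * (norm (x' - x))\<^sup>2" for n
    by (rule quad_bound[OF X dFn lipA x x'])
  have limF: "(\<lambda>n. Fn n z) \<longlonglongrightarrow> f z yhat + inner (gy_f z yhat) v" if z: "z \<in> X" for z
  proof -
    have "(\<lambda>n. inverse (inverse (real (Suc n))) *\<^sub>R (f z (yhat + inverse (real (Suc n)) *\<^sub>R v) - f z yhat))
          \<longlonglongrightarrow> inner (gy_f z yhat) v"
      by (rule dq_limit[OF gy[OF z] Y yh yv])
    then have "(\<lambda>n. f z yhat + inverse (sn n) * (f z (yhat + sn n *\<^sub>R v) - f z yhat)) \<longlonglongrightarrow> f z yhat + inner (gy_f z yhat) v"
      unfolding sn_def by (intro tendsto_intros) simp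
    then show ?thesis unfolding Fn_def .
  qed
  have limA: "(\<lambda>n. An n x) \<longlonglongrightarrow> gx_f x yhat + Hxy x yhat v"
  proof -
    have "(\<lambda>n. inverse (inverse (real (Suc n))) *\<^sub>R (gx_f x (yhat + inverse (real (Suc n)) *\<^sub>R v) - gx_f x yhat))
          \<longlonglongrightarrow> Hxy x yhat v"
      by (rule dq_limit[OF Hd[OF x yh] Y yh yv])
    then have "(\<lambda>n. gx_f x yhat + inverse (sn n) *\<^sub>R (gx_f x (yhat + sn n *\<^sub>R v) - gx_f x yhat)) \<longlonglongrightarrow> gx_f x yhat + Hxy x yhat v"
      unfolding sn_def by (intro tendsto_intros)
    then show ?thesis unfolding An_def .
  qed
  have "(\<lambda>n. \<bar>Fn n x' - Fn n x - inner (An n x) (x' - x)\<bar>) \<longlonglongrightarrow>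
        \<bar>(f x' yhat + inner (gy_f x' yhat) v) - (f x yhat + inner (gy_f x yhat) v) - inner (gx_f x yhat + Hxy x yhat v) (x' - x)\<bar>"
    by (intro tendsto_intros limF x x' limA)
  then have "\<bar>(f x' yhat + inner (gy_f x' yhat) v) - (f x yhat + inner (gy_f x yhat) v) - inner (gx_f x yhat + Hxy x yhat v) (x' - x)\<bar>
      \<le> K / 2 * (norm (x' - x))\<^sup>2"
    by (rule LIMSEQ_le_const2) (use qn in auto)
  then show ?thesis unfolding v_def K_def .
qed

lemma scale_bound:
  fixes Z :: "'c::real_normed_vector"
  assumes "s > 0" "norm Z \<le> s * B"
  shows "norm (inverse s *\<^sub>R Z) \<le> B"
proof -
  have "norm (inverse s *\<^sub>R Z) = inverse s * norm Z" using assms(1) by simp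
  also have "\<dots> \<le> inverse s * (s * B)" using assms by (intro mult_left_mono) auto
  also have "\<dots> = B" using assms(1) by simp
  finally show ?thesis .
qed

lemma Hxy_bound:
  fixes gx_f :: "'a::euclidean_space \<Rightarrow> 'b::euclidean_space \<Rightarrow> 'a"
    and Hxy :: "'a \<Rightarrow> 'b \<Rightarrow> ('b \<Rightarrow>\<^sub>L 'a)"
  assumes Y: "convex Y" and yh: "yhat \<in> Y" and y1: "y1 \<in> Y" and y2: "y2 \<in> Y"
    and Hd: "((\<lambda>y'. gx_f x y') has_derivative blinfun_apply (Hxy x yhat)) (at yhat within Y)"
    and lipy: "\<And>y y'. y \<in> Y \<Longrightarrow> y' \<in> Y \<Longrightarrow> norm (gx_f x y' - gx_f x y) \<le> mu * norm (y' - y)"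
  shows "norm (Hxy x yhat (y1 - y2)) \<le> mu * norm (y1 - y2)"
proof -
  define sn where "sn = (\<lambda>n::nat. inverse (real (Suc n)))"
  have sn_pos: "sn n > 0" "sn n \<le> 1" for n by (auto simp: sn_def field_simps)
  have yv: "yhat + (yi - yhat) \<in> Y" if "yi \<in> Y" for yi using that by simp
  have inY: "yhat + sn n *\<^sub>R (yi - yhat) \<in> Y" if "yi \<in> Y" for n yi
  proof -
    have "(1 - sn n) *\<^sub>R yhat + sn n *\<^sub>R yi \<in> Y"
      using convexD_alt[OF Y yh that, of "sn n"] sn_pos[of n] by simp
    then show ?thesis by (simp add: algebra_simps)
  qed
  have l1: "(\<lambda>n. inverse (sn n) *\<^sub>R (gx_f x (yhat + sn n *\<^sub>R (y1 - yhat)) - gx_f x yhat)) \<longlonglongrightarrow> Hxy x yhat (y1 - yhat)"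
    unfolding sn_def by (rule dq_limit[OF Hd Y yh yv[OF y1]])
  have l2: "(\<lambda>n. inverse (sn n) *\<^sub>R (gx_f x (yhat + sn n *\<^sub>R (y2 - yhat)) - gx_f x yhat)) \<longlonglongrightarrow> Hxy x yhat (y2 - yhat)"
    unfolding sn_def by (rule dq_limit[OF Hd Y yh yv[OF y2]])
  have "(\<lambda>n. norm (inverse (sn n) *\<^sub>R (gx_f x (yhat + sn n *\<^sub>R (y1 - yhat)) - gx_f x yhat)
             - inverse (sn n) *\<^sub>R (gx_f x (yhat + sn n *\<^sub>R (y2 - yhat)) - gx_f x yhat)))
        \<longlonglongrightarrow> norm (Hxy x yhat (y1 - yhat) - Hxy x yhat (y2 - yhat))"
    by (intro tendsto_intros l1 l2)
  moreover have "Hxy x yhat (y1 - yhat) - Hxy x yhat (y2 - yhat) = Hxy x yhat (y1 - y2)"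
    by (simp add: blinfun.diff_right)
  moreover have "norm (inverse (sn n) *\<^sub>R (gx_f x (yhat + sn n *\<^sub>R (y1 - yhat)) - gx_f x yhat)
             - inverse (sn n) *\<^sub>R (gx_f x (yhat + sn n *\<^sub>R (y2 - yhat)) - gx_f x yhat)) \<le> mu * norm (y1 - y2)" for n
  proof -
    have "inverse (sn n) *\<^sub>R (gx_f x (yhat + sn n *\<^sub>R (y1 - yhat)) - gx_f x yhat)
             - inverse (sn n) *\<^sub>R (gx_f x (yhat + sn n *\<^sub>R (y2 - yhat)) - gx_f x yhat)
          = inverse (sn n) *\<^sub>R (gx_f x (yhat + sn n *\<^sub>R (y1 - yhat)) - gx_f x (yhat + sn n *\<^sub>R (y2 - yhat)))"
      by (simp add: algebra_simps)
    moreover have "norm (gx_f x (yhat + sn n *\<^sub>R (y1 - yhat)) - gx_f x (yhat + sn n *\<^sub>R (y2 - yhat)))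
        \<le> mu * norm ((yhat + sn n *\<^sub>R (y1 - yhat)) - (yhat + sn n *\<^sub>R (y2 - yhat)))"
      by (rule lipy[OF inY[OF y2] inY[OF y1]])
    moreover have "norm ((yhat + sn n *\<^sub>R (y1 - yhat)) - (yhat + sn n *\<^sub>R (y2 - yhat))) = sn n * norm (y1 - y2)"
    proof -
      have "(yhat + sn n *\<^sub>R (y1 - yhat)) - (yhat + sn n *\<^sub>R (y2 - yhat)) = sn n *\<^sub>R (y1 - y2)"
        by (simp add: algebra_simps)
      then show ?thesis using sn_pos[of n] by simp
    qed
    ultimately have "norm (gx_f x (yhat + sn n *\<^sub>R (y1 - yhat)) - gx_f x (yhat + sn n *\<^sub>R (y2 - yhat))) \<le> sn n * (mu * norm (y1 - y2))"
      and eq: "inverse (sn n) *\<^sub>R (gx_f x (yhat + sn n *\<^sub>R (y1 - yhat)) - gx_f x yhat)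
             - inverse (sn n) *\<^sub>R (gx_f x (yhat + sn n *\<^sub>R (y2 - yhat)) - gx_f x yhat)
          = inverse (sn n) *\<^sub>R (gx_f x (yhat + sn n *\<^sub>R (y1 - yhat)) - gx_f x (yhat + sn n *\<^sub>R (y2 - yhat)))"
      by (simp_all add: mult_ac)
    then show ?thesis unfolding eq using sn_pos[of n] by (intro scale_bound) auto
  qed
  ultimately show ?thesis by (intro LIMSEQ_le_const2[where X="\<lambda>n. norm (inverse (sn n) *\<^sub>R (gx_f x (yhat + sn n *\<^sub>R (y1 - yhat)) - gx_f x yhat)
             - inverse (sn n) *\<^sub>R (gx_f x (yhat + sn n *\<^sub>R (y2 - yhat)) - gx_f x yhat))"]) auto
qed



lemma telescope:
  fixes Psi s :: "nat \<Rightarrow> real"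
  assumes desc: "\<And>t. t < T \<Longrightarrow> Psi (Suc t) \<le> Psi t - gam * (s t)\<^sup>2 / 2 + a * gam * s t"
  shows "k \<le> T \<Longrightarrow> (\<Sum>t<k. gam * (s t)\<^sup>2 / 2 - a * gam * s t) \<le> Psi 0 - Psi k"
proof (induction k)
  case 0 then show ?case by simp
next
  case (Suc k)
  then have "(\<Sum>t<k. gam * (s t)\<^sup>2 / 2 - a * gam * s t) \<le> Psi 0 - Psi k" by simp
  moreover have "Psi (Suc k) \<le> Psi k - gam * (s k)\<^sup>2 / 2 + a * gam * s k" using desc Suc.prems by simp
  ultimately show ?case by simp
qed

lemma finish_small:
  fixes s :: "nat \<Rightarrow> real"
  assumes g: "gam > 0" and L: "L > 0" and gL: "gam * L \<le> 1 / 3" and a: "a \<ge> 0" and b: "b \<ge> 0"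
    and eps: "eps > 0"
    and hyp: "(a \<le> eps / 200 \<and> b = 0) \<or> (a = 0 \<and> 40000 * L * b \<le> eps\<^sup>2)"
    and Tb: "real T * gam \<ge> 700 * Dlt / eps\<^sup>2 + 1 / L" and Dlt: "Dlt \<ge> 0"
    and desc: "\<And>t. t < T \<Longrightarrow> Psi (Suc t) \<le> Psi t - gam * (s t)\<^sup>2 / 2 + a * gam * s t"
    and tot: "Psi 0 - Psi T \<le> Dlt + b"
    and t0: "t0 < T" "\<And>t. t < T \<Longrightarrow> s t0 \<le> s t"
  shows "s t0 \<le> eps / 6"
proof (rule ccontr)
  assume "\<not> ?thesis"
  then have big: "s t0 > eps / 6" by simp
  define th where "th = eps / 6"
  have th: "th > 0" using eps by (simp add: th_def)
  have a12: "a \<le> eps / 200" using hyp eps by auto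
  have tha: "th / 2 - a \<ge> 47 * eps / 1200" using a12 eps by (simp add: th_def)
  have hterm: "gam * (s t)\<^sup>2 / 2 - a * gam * s t \<ge> gam * th * (th / 2 - a)" if "t < T" for t
  proof -
    have st: "s t \<ge> th" using t0(2)[OF that] big by (simp add: th_def)
    have "th / 2 - a \<ge> 0" using tha eps by linarith
    then have "s t / 2 - a \<ge> th / 2 - a" using st by simp
    have "gam * th * (th / 2 - a) \<le> gam * s t * (th / 2 - a)"
      using st g \<open>th / 2 - a \<ge> 0\<close> by (intro mult_right_mono mult_left_mono) auto
    also have "\<dots> \<le> gam * s t * (s t / 2 - a)"
      using st th g \<open>s t / 2 - a \<ge> th / 2 - a\<close> by (intro mult_left_mono) auto
    also have "\<dots> = gam * (s t)\<^sup>2 / 2 - a * gam * s t" by (simp add: power2_eq_square algebra_simps)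
    finally show ?thesis .
  qed
  have "(\<Sum>t<T. gam * th * (th / 2 - a)) \<le> (\<Sum>t<T. gam * (s t)\<^sup>2 / 2 - a * gam * s t)"
    by (rule sum_mono) (use hterm in auto)
  also have "\<dots> \<le> Psi 0 - Psi T" by (rule telescope[where Psi=Psi and s=s and gam=gam and a=a and T=T, OF desc]) auto
  finally have S: "real T * (gam * th * (th / 2 - a)) \<le> Dlt + b" using tot by simp
  have TG: "real T * gam * eps\<^sup>2 \<ge> 700 * Dlt + eps\<^sup>2 / L"
  proof -
    have "(700 * Dlt / eps\<^sup>2 + 1 / L) * eps\<^sup>2 \<le> real T * gam * eps\<^sup>2"
      using Tb by (intro mult_right_mono) auto
    moreover have "(700 * Dlt / eps\<^sup>2 + 1 / L) * eps\<^sup>2 = 700 * Dlt + eps\<^sup>2 / L"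
      using eps by (simp add: field_simps)
    ultimately show ?thesis by simp
  qed
  have eL: "eps\<^sup>2 / L > 0" using eps L by simp
  show False using hyp
  proof
    assume h: "a \<le> eps / 200 \<and> b = 0"
    have "real T * (gam * th * (47 * eps / 1200)) \<le> real T * (gam * th * (th / 2 - a))"
      using tha g th by (intro mult_left_mono) auto
    also have "\<dots> \<le> Dlt" using S h by simp
    finally have "real T * gam * eps\<^sup>2 * (47 / 7200) \<le> Dlt" by (simp add: th_def power2_eq_square)
    moreover obtain Z where Z: "Z = real T * gam * eps\<^sup>2" by blast
    moreover obtain p where p: "p = eps\<^sup>2 / L" by blast
    ultimately have "Z * (47 / 7200) \<le> Dlt" "700 * Dlt + p \<le> Z" "p > 0" using TG eL by simp_all
    then show False using Dlt by linarith
  next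
    assume h: "a = 0 \<and> 40000 * L * b \<le> eps\<^sup>2"
    have bb: "b \<le> eps\<^sup>2 / L / 40000" using h L by (simp add: field_simps)
    have "real T * gam * eps\<^sup>2 / 72 \<le> Dlt + b" using S h by (simp add: th_def power2_eq_square)
    moreover obtain Z where Z: "Z = real T * gam * eps\<^sup>2" by blast
    moreover obtain p where p: "p = eps\<^sup>2 / L" by blast
    ultimately have "Z / 72 \<le> Dlt + b" "700 * Dlt + p \<le> Z" "p > 0" "b \<le> p / 40000" using TG eL bb by simp_all
    then show False using Dlt by linarith
  qed
qed

lemma finish_grad:
  fixes N s gam L a b eps :: real
  assumes g: "gam > 0" and L: "L > 0" and gL: "gam * L \<le> 1 / 3" and a: "a \<ge> 0" and b: "b \<ge> 0"
    and eps: "eps > 0"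
    and hyp: "(a \<le> eps / 200 \<and> b = 0) \<or> (a = 0 \<and> 40000 * L * b \<le> eps\<^sup>2)"
    and s: "0 \<le> s" "s \<le> eps / 6" and N: "N \<ge> 0"
    and NN: "N\<^sup>2 \<le> 4 * (s + a) * N + 8 * L * b + 4 * L * gam * s\<^sup>2"
  shows "N \<le> eps"
proof (rule ccontr)
  assume "\<not> ?thesis"
  then have Ne: "N > eps" by simp
  have a12: "a \<le> eps / 200" using hyp eps by auto
  have "4 * (s + a) * N \<le> 4 * (eps / 6 + eps / 200) * N"
    using s a12 N by (intro mult_right_mono) auto
  then have t1: "4 * (s + a) * N \<le> (103 / 150) * (eps * N)" by (simp add: algebra_simps)
  have "eps * N \<le> N * N" using Ne eps by (intro mult_right_mono) auto
  then have t1': "4 * (s + a) * N \<le> (103 / 150) * N\<^sup>2" using t1 by (simp add: power2_eq_square)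
  have "s\<^sup>2 \<le> (eps / 6)\<^sup>2" using s by (intro power_mono) auto
  moreover have "L * gam \<le> 1 / 3" using gL by (simp add: mult.commute)
  ultimately have "(L * gam) * s\<^sup>2 \<le> (1 / 3) * (eps / 6)\<^sup>2"
    using g L by (intro mult_mono) auto
  then have "4 * L * gam * s\<^sup>2 \<le> 4 * (1 / 3) * (eps / 6)\<^sup>2" by (simp add: mult.assoc)
  then have t2: "4 * L * gam * s\<^sup>2 \<le> eps\<^sup>2 / 27" by (simp add: power2_eq_square)
  have t3: "8 * L * b \<le> eps\<^sup>2 / 5000" using hyp by auto
  have "eps\<^sup>2 \<le> N\<^sup>2" using Ne eps by (intro power_mono) auto
  moreover have "eps\<^sup>2 > 0" using eps by simp
  ultimately show False using NN t1' t2 t3 by linarith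
qed



lemma sqnorm_add:
  fixes a b :: "'a::real_inner"
  shows "(norm (a + b))\<^sup>2 = (norm a)\<^sup>2 + 2 * inner b a + (norm b)\<^sup>2"
  unfolding power2_norm_eq_inner by (simp add: inner_add_left inner_add_right inner_commute)

lemma absD:
  fixes A B C K :: real
  assumes "\<bar>A - B - C\<bar> \<le> K"
  shows "A \<ge> B + C - K" "A \<le> B + C + K"
  using assms by (simp_all add: abs_le_iff)

theorem theorem3:
  fixes X :: "'a::euclidean_space set" and Y :: "'b::euclidean_space set"
    and f :: "'a \<Rightarrow> 'b \<Rightarrow> real"
    and gx_f :: "'a \<Rightarrow> 'b \<Rightarrow> 'a" and gy_f :: "'a \<Rightarrow> 'b \<Rightarrow> 'b"
    and Hxy :: "'a \<Rightarrow> 'b \<Rightarrow> ('b \<Rightarrow>\<^sub>L 'a)"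
    and lam mu rho1 sigma1 tau1 D eps :: real
    and x0 :: 'a and yhat :: 'b and T :: nat
    and xs :: "nat \<Rightarrow> 'a" and ys :: "nat \<Rightarrow> 'b" and xt :: "nat \<Rightarrow> 'a"
  assumes X: "convex X" "interior X \<noteq> {}"
    and Y: "convex Y" "interior Y \<noteq> {}" "compact Y"
    and D: "diameter Y \<le> D"
    (* (A1) *)
    and gx: "\<And>x y. x \<in> X \<Longrightarrow> y \<in> Y \<Longrightarrow>
               ((\<lambda>x'. f x' y) has_derivative (\<lambda>h. inner (gx_f x y) h)) (at x within X)"
    and A1: "lam > 0" "mu \<ge> 0"
       "\<And>x x' y y'. x \<in> X \<Longrightarrow> x' \<in> X \<Longrightarrow> y \<in> Y \<Longrightarrow> y' \<in> Y \<Longrightarrow>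
          norm (gx_f x' y' - gx_f x y) \<le> lam * norm (x' - x) + mu * norm (y' - y)"
    (* (A2), k = 1 *)
    and gy: "\<And>x y. x \<in> X \<Longrightarrow> y \<in> Y \<Longrightarrow>
               ((\<lambda>y'. f x y') has_derivative (\<lambda>h. inner (gy_f x y) h)) (at y within Y)"
    and A2: "rho1 > 0" "sigma1 \<ge> 0"
       "\<And>x x' y y'. x \<in> X \<Longrightarrow> x' \<in> X \<Longrightarrow> y \<in> Y \<Longrightarrow> y' \<in> Y \<Longrightarrow>
          norm (gy_f x' y' - gy_f x y) \<le> rho1 * norm (y' - y) + sigma1 * norm (x' - x)"
    (* (A3), k = 1 *)
    and Hxy: "\<And>x y. x \<in> X \<Longrightarrow> y \<in> Y \<Longrightarrow>
               ((\<lambda>y'. gx_f x y') has_derivative blinfun_apply (Hxy x y)) (at y within Y)"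
    and A3: "tau1 \<ge> 0"
       "\<And>x x' y. x \<in> X \<Longrightarrow> x' \<in> X \<Longrightarrow> y \<in> Y \<Longrightarrow>
          norm (Hxy x' y - Hxy x y) \<le> tau1 * norm (x' - x)"
    (* (A4), k = 1 *)
    and A4: "{(x, y). x \<in> X \<and> y \<in> Y \<and> \<not> ((\<lambda>x'. Hxy x' y) differentiable (at x within X))}
               \<in> sets lebesgue"
    and eps_pos: "eps > 0"
    and small: "200 * min mu (sqrt ((lam + 2 * tau1 * D) * rho1)) * D \<le> eps"
    and x0: "x0 \<in> X" and yhat: "yhat \<in> Y"
    and bdd: "bdd_below (max_fun f Y ` X)"
    and T: "real T \<ge> (3 + mu\<^sup>2 / ((lam + 2 * tau1 * D) * rho1)) *
              (700 * (lam + 2 * tau1 * D) * (max_fun f Y x0 - (INF x\<in>X. max_fun f Y x)) / eps\<^sup>2 + 1)"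
    and run: "alg2_run X Y gx_f gy_f Hxy x0 yhat
               (1 / (3 * (lam + 2 * tau1 * D) + mu\<^sup>2 / rho1)) T
               (mu \<ge> sqrt ((lam + 2 * tau1 * D) * rho1)) (1 / rho1) xs ys xt"
  shows "alg2_output (1 / (3 * (lam + 2 * tau1 * D) + mu\<^sup>2 / rho1)) T xs xt \<in> X \<and>
         (\<exists>g. (moreau_env (max_fun f Y) X (2 * (lam + 2 * tau1 * D)) has_derivative (\<lambda>h. inner g h))
                (at (alg2_output (1 / (3 * (lam + 2 * tau1 * D) + mu\<^sup>2 / rho1)) T xs xt))
              \<and> norm g \<le> eps)"

proof -
  define L where "L = lam + 2 * tau1 * D"
  define gam where "gam = 1 / (3 * L + mu\<^sup>2 / rho1)"
  define phi where "phi = max_fun f Y"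
  note T' = T[folded L_def phi_def]
  note small' = small[folded L_def]
  note run' = run[folded L_def gam_def]
  have Xne: "X \<noteq> {}" using X(2) interior_subset by blast
  have Yne: "Y \<noteq> {}" using Y(2) interior_subset by blast
  have bY: "bounded Y" using Y(3) by (rule compact_imp_bounded)
  have Dd: "norm (y1 - y2) \<le> D" if "y1 \<in> Y" "y2 \<in> Y" for y1 y2
    using diameter_bounded_bound[OF bY that] D by (simp add: dist_norm)
  have D0: "D \<ge> 0" using Dd Yne by fastforce
  have tD: "tau1 * D \<ge> 0" using A3(1) D0 by simp
  have Lpos: "L > 0" using A1(1) tD by (simp add: L_def)
  have lamL: "lam \<le> L" "lam + tau1 * D \<le> L" using tD unfolding L_def by linarith+
  have gam0: "gam > 0" using Lpos A2(1) by (simp add: gam_def add_pos_nonneg)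
  have gL: "gam * L \<le> 1 / 3"
  proof -
    have "3 * L \<le> 3 * L + mu\<^sup>2 / rho1" using A2(1) by simp
    then show ?thesis using Lpos unfolding gam_def by (simp add: field_simps)
  qed
  have fcont: "continuous_on Y (f x)" if "x \<in> X" for x
    by (rule has_derivative_continuous_on[OF gy[OF that]])
  have fb: "bdd_above (f x ` Y)" if "x \<in> X" for x
    by (rule bounded_imp_bdd_above[OF compact_imp_bounded[OF compact_continuous_image[OF fcont[OF that] Y(3)]]])
  have fle: "f x y \<le> phi x" if "x \<in> X" "y \<in> Y" for x y
    unfolding phi_def max_fun_def by (rule cSUP_upper[OF that(2) fb[OF that(1)]])
  have phile: "phi x \<le> B" if "\<And>y. y \<in> Y \<Longrightarrow> f x y \<le> B" for x B
    unfolding phi_def max_fun_def by (rule cSUP_least[OF Yne that])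
  have lipx: "norm (gx_f x' y - gx_f x y) \<le> lam * norm (x' - x)" if "x \<in> X" "x' \<in> X" "y \<in> Y" for x x' y
    using A1(3)[OF that(1,2) that(3) that(3)] by simp
  have lipy: "norm (gy_f x y' - gy_f x y) \<le> rho1 * norm (y' - y)" if "x \<in> X" "y \<in> Y" "y' \<in> Y" for x y y'
    using A2(3)[OF that(1) that(1) that(2,3)] by simp
  have lipgy: "norm (gx_f x y' - gx_f x y) \<le> mu * norm (y' - y)" if "x \<in> X" "y \<in> Y" "y' \<in> Y" for x y y'
    using A1(3)[OF that(1) that(1) that(2,3)] by simp
  have qx: "\<bar>f x' y - f x y - inner (gx_f x y) (x' - x)\<bar> \<le> lam / 2 * (norm (x' - x))\<^sup>2"
    if "x \<in> X" "x' \<in> X" "y \<in> Y" for x x' y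
    by (rule quad_bound[OF X(1) gx[OF _ that(3)] lipx[OF _ _ that(3)] that(1,2)])
  have qy: "\<bar>f x y' - f x y - inner (gy_f x y) (y' - y)\<bar> \<le> rho1 / 2 * (norm (y' - y))\<^sup>2"
    if "x \<in> X" "y \<in> Y" "y' \<in> Y" for x y y'
    by (rule quad_bound[OF Y(1) gy[OF that(1)] lipy[OF that(1)] that(2,3)])
  have wc: "phi (midpoint u v) \<le> (phi u + phi v) / 2 + lam / 8 * (norm (u - v))\<^sup>2"
    if "u \<in> X" "v \<in> X" for u v
  proof (rule phile)
    fix y assume y: "y \<in> Y"
    define m where "m = midpoint u v"
    have mX: "m \<in> X" using convexD[OF X(1) that, of "1/2" "1/2"] by (simp add: m_def midpoint_def scaleR_add_right)
    have um: "u - m = (1/2) *\<^sub>R (u - v)" "v - m = - ((1/2) *\<^sub>R (u - v))"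
      by (simp_all add: m_def midpoint_def algebra_simps flip: scaleR_add_left)
    have n1: "(norm (u - m))\<^sup>2 = (norm (u - v))\<^sup>2 / 4" "(norm (v - m))\<^sup>2 = (norm (u - v))\<^sup>2 / 4"
      unfolding um by (simp_all add: power2_eq_square)
    have i1: "inner (gx_f m y) (u - m) + inner (gx_f m y) (v - m) = 0"
      unfolding um by (simp add: inner_minus_right)
    have "f u y \<ge> f m y + inner (gx_f m y) (u - m) - lam / 2 * (norm (u - m))\<^sup>2"
      by (rule absD(1)[OF qx[OF mX that(1) y]])
    moreover have "f v y \<ge> f m y + inner (gx_f m y) (v - m) - lam / 2 * (norm (v - m))\<^sup>2"
      by (rule absD(1)[OF qx[OF mX that(2) y]])
    moreover have "f u y \<le> phi u" "f v y \<le> phi v" using fle that y by auto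
    ultimately have "2 * f m y \<le> phi u + phi v + lam / 2 * (norm (u - m))\<^sup>2 + lam / 2 * (norm (v - m))\<^sup>2"
      using i1 by linarith
    moreover have "lam / 2 * (norm (u - m))\<^sup>2 + lam / 2 * (norm (v - m))\<^sup>2 = 2 * (lam / 8 * (norm (u - v))\<^sup>2)"
      unfolding n1 by simp
    moreover obtain Q where Q: "lam / 8 * (norm (u - v))\<^sup>2 = Q" by blast
    moreover obtain Q1 where Q1: "lam / 2 * (norm (u - m))\<^sup>2 = Q1" by blast
    moreover obtain Q2 where Q2: "lam / 2 * (norm (v - m))\<^sup>2 = Q2" by blast
    ultimately have "f m y \<le> (phi u + phi v) / 2 + Q"
      by (simp only: Q Q1 Q2) argo
    then have "f m y \<le> (phi u + phi v) / 2 + lam / 8 * (norm (u - v))\<^sup>2" using Q by simp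
    then show "f (midpoint u v) y \<le> (phi u + phi v) / 2 + lam / 8 * (norm (u - v))\<^sup>2"
      unfolding m_def .
  qed
  have bddphi: "bdd_below (phi ` X)" using bdd unfolding phi_def .
  have cL: "lam < 2 * L" using lamL A1(1) by linarith
  have runu: "xs 0 = x0" "\<And>t. t < T \<Longrightarrow> is_proj X (xt (Suc t)) (xs (Suc t))"
    using run' unfolding alg2_run_def by auto
  have Xs: "xs t \<in> X" if "t \<le> T" for t
    using that
  proof (induction t)
    case 0 then show ?case using runu(1) x0 by simp
  next
    case (Suc t) then show ?case using runu(2)[of t] unfolding is_proj_def by simp
  qed
  define Dlt where "Dlt = phi x0 - (INF x\<in>X. phi x)"
  have INFle: "(INF x\<in>X. phi x) \<le> phi z" if "z \<in> X" for z
    by (rule cINF_lower[OF bddphi that])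
  have Dlt0: "Dlt \<ge> 0" using INFle[OF x0] by (simp add: Dlt_def)
  define q where "q = 3 + mu\<^sup>2 / (L * rho1)"
  have q3: "q \<ge> 3" using Lpos A2(1) by (simp add: q_def)
  have Lq: "3 * L + mu\<^sup>2 / rho1 = L * q" using Lpos A2(1) by (simp add: q_def field_simps)
  have T'': "real T \<ge> q * (700 * L * Dlt / eps\<^sup>2 + 1)" using T' unfolding q_def Dlt_def by simp
  have inner0: "700 * L * Dlt / eps\<^sup>2 + 1 \<ge> 1" using Lpos Dlt0 eps_pos by simp
  have "q * 1 \<le> q * (700 * L * Dlt / eps\<^sup>2 + 1)" using q3 inner0 by (intro mult_left_mono) auto
  then have Tq: "real T \<ge> 3" using T'' q3 by linarith
  then have Tpos: "T > 0" by simp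
  have TG: "real T * gam \<ge> 700 * Dlt / eps\<^sup>2 + 1 / L"
  proof -
    have "real T * gam = real T / (L * q)" unfolding gam_def Lq by simp
    also have "\<dots> \<ge> q * (700 * L * Dlt / eps\<^sup>2 + 1) / (L * q)"
      using T'' Lpos q3 by (intro divide_right_mono) auto
    finally have "real T * gam \<ge> (700 * L * Dlt / eps\<^sup>2 + 1) / L" using q3 Lpos by simp
    moreover have "(700 * L * Dlt / eps\<^sup>2 + 1) / L = 700 * Dlt / eps\<^sup>2 + 1 / L"
      using Lpos by (simp add: field_simps)
    ultimately show ?thesis by simp
  qed
  define s where "s = alg2_eps gam xs xt"
  have key: "\<exists>Psi a b. a \<ge> 0 \<and> b \<ge> 0 \<and> (\<forall>t<T. s t \<ge> 0) \<and> ((a \<le> eps / 200 \<and> b = 0) \<or> (a = 0 \<and> 40000 * L * b \<le> eps\<^sup>2))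
     \<and> (\<forall>t<T. Psi (xs (Suc t)) \<le> Psi (xs t) - gam * (s t)\<^sup>2 / 2 + a * gam * s t)
     \<and> Psi (xs 0) - Psi (xs T) \<le> Dlt + b
     \<and> (\<forall>t<T. \<exists>g. (moreau_env phi X (2 * L) has_derivative (\<lambda>h. inner g h)) (at (xs t)) \<and>
            (norm g)\<^sup>2 \<le> 4 * (s t + a) * norm g + 8 * L * b + 4 * L * gam * (s t)\<^sup>2)"
  proof (cases "mu \<ge> sqrt (L * rho1)")
    case False
    have runs: "ys t \<in> Y" "xt (Suc t) = xs t - gam *\<^sub>R gx_f (xs t) (ys t)" "is_proj X (xt (Suc t)) (xs (Suc t))"
      if "t < T" for t
      using run' that False unfolding alg2_run_def by auto
    define a where "a = mu * D"
    have a0: "a \<ge> 0" using A1(2) D0 by (simp add: a_def)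
    have a200: "a \<le> eps / 200" using small' False by (simp add: a_def min_def)
    have Mg: "lam * gam \<le> 1"
    proof -
      have "lam * gam \<le> L * gam" using lamL(1) gam0 by (intro mult_right_mono) auto
      then show ?thesis using gL by (simp add: mult.commute)
    qed
    have step: "xs (Suc t) \<in> X \<and> phi (xs (Suc t)) \<le> phi (xs t) - gam * (s t)\<^sup>2 / 2 + a * gam * s t \<and>
       (\<exists>g. (moreau_env phi X (2 * L) has_derivative (\<lambda>h. inner g h)) (at (xs t)) \<and>
         (norm g)\<^sup>2 \<le> 4 * (s t + a) * norm g + 8 * L * 0 + 4 * L * gam * (s t)\<^sup>2) \<and> s t \<ge> 0"
      if t: "t < T" for t
    proof -
      define x where "x = xs t"
      define G where "G = gx_f (xs t) (ys t)"
      have x: "x \<in> X" using Xs t by (simp add: x_def)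
      have yt: "ys t \<in> Y" using runs(1)[OF t] .
      have xt_eq: "xt (Suc t) = x - gam *\<^sub>R G" using runs(2)[OF t] by (simp add: x_def G_def)
      have pr: "is_proj X (x - gam *\<^sub>R G) (xs (Suc t))" using runs(3)[OF t] xt_eq by simp
      have sdef: "s t = sqrt ((norm ((x - gam *\<^sub>R G) - x))\<^sup>2 / gam\<^sup>2 - (norm ((x - gam *\<^sub>R G) - xs (Suc t)))\<^sup>2 / gam\<^sup>2)"
        unfolding s_def alg2_eps_def xt_eq x_def ..
      have Pp: "\<And>z. z \<in> X \<Longrightarrow> phi z \<le> phi z \<and> phi z \<le> phi z + 0" by simp
      have cross: "inner (gx_f x y) (z - x) \<le> inner G (z - x) + a * norm (z - x)"
        and cross2: "inner G (z - x) \<le> inner (gx_f x y) (z - x) + a * norm (z - x)"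
        if "y \<in> Y" "z \<in> X" for y z
      proof -
        have "norm (gx_f x y - G) \<le> mu * norm (y - ys t)" unfolding G_def x_def
          by (rule lipgy[OF Xs[of t] yt that(1)]) (use t in simp)
        also have "\<dots> \<le> mu * D" using Dd[OF that(1) yt] A1(2) by (intro mult_left_mono) auto
        finally have nb: "norm (gx_f x y - G) \<le> a" by (simp add: a_def)
        have "inner (gx_f x y - G) (z - x) \<le> norm (gx_f x y - G) * norm (z - x)" by (rule norm_cauchy_schwarz)
        also have "\<dots> \<le> a * norm (z - x)" using nb by (intro mult_right_mono) auto
        finally have c1: "inner (gx_f x y - G) (z - x) \<le> a * norm (z - x)" .
        have "inner (G - gx_f x y) (z - x) \<le> norm (G - gx_f x y) * norm (z - x)" by (rule norm_cauchy_schwarz)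
        also have "\<dots> \<le> a * norm (z - x)" using nb by (intro mult_right_mono) (auto simp: norm_minus_commute)
        finally have c2: "inner (G - gx_f x y) (z - x) \<le> a * norm (z - x)" .
        show "inner (gx_f x y) (z - x) \<le> inner G (z - x) + a * norm (z - x)"
          using c1 by (simp add: inner_diff_left)
        show "inner G (z - x) \<le> inner (gx_f x y) (z - x) + a * norm (z - x)"
          using c2 by (simp add: inner_diff_left)
      qed
      have up: "phi z \<le> phi x + inner G (z - x) + lam / 2 * (norm (z - x))\<^sup>2 + a * norm (z - x)"
        if z: "z \<in> X" for z
      proof (rule phile)
        fix y assume y: "y \<in> Y"
        have "f z y \<le> f x y + inner (gx_f x y) (z - x) + lam / 2 * (norm (z - x))\<^sup>2"
          by (rule absD(2)[OF qx[OF x z y]])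
        then show "f z y \<le> phi x + inner G (z - x) + lam / 2 * (norm (z - x))\<^sup>2 + a * norm (z - x)"
          using fle[OF x y] cross[OF y z] by linarith
      qed
      have lo: "phi z \<ge> phi x + inner G (z - x) - L / 2 * (norm (z - x))\<^sup>2 - a * norm (z - x)"
        if z: "z \<in> X" for z
      proof -
        have lL: "lam / 2 * (norm (z - x))\<^sup>2 \<le> L / 2 * (norm (z - x))\<^sup>2"
          using lamL(1) by (intro mult_right_mono) auto
        have "phi x \<le> phi z - inner G (z - x) + L / 2 * (norm (z - x))\<^sup>2 + a * norm (z - x)"
        proof (rule phile)
          fix y assume y: "y \<in> Y"
          have "f z y \<ge> f x y + inner (gx_f x y) (z - x) - lam / 2 * (norm (z - x))\<^sup>2"
            by (rule absD(1)[OF qx[OF x z y]])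
          then show "f x y \<le> phi z - inner G (z - x) + L / 2 * (norm (z - x))\<^sup>2 + a * norm (z - x)"
            using fle[OF z y] cross2[OF y z] lL by linarith
        qed
        then show ?thesis by linarith
      qed
      note os = one_step[OF X(1) Xne bddphi wc cL Lpos gam0 Mg a0 order_refl Pp x pr up lo sdef]
      have "s t \<ge> 0" using step_lemma(1)[OF X(1) x gam0 pr refl] sdef by simp
      then show ?thesis using os unfolding x_def by simp
    qed
    have f1: "\<forall>t<T. s t \<ge> 0" using step by blast
    have f2: "\<forall>t<T. phi (xs (Suc t)) \<le> phi (xs t) - gam * (s t)\<^sup>2 / 2 + a * gam * s t" using step by blast
    have f3: "\<forall>t<T. \<exists>g. (moreau_env phi X (2 * L) has_derivative (\<lambda>h. inner g h)) (at (xs t)) \<and>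
            (norm g)\<^sup>2 \<le> 4 * (s t + a) * norm g + 8 * L * 0 + 4 * L * gam * (s t)\<^sup>2" using step by blast
    have f4: "phi (xs 0) - phi (xs T) \<le> Dlt + 0" using runu(1) INFle[OF Xs[OF order_refl]] by (simp add: Dlt_def)
    have f5: "(a \<le> eps / 200 \<and> (0::real) = 0) \<or> (a = 0 \<and> 40000 * L * 0 \<le> eps\<^sup>2)" using a200 by simp
    show ?thesis using a0 f1 f2 f3 f4 f5 by (intro exI[of _ phi] exI[of _ a] exI[of _ 0]) (simp only: order_refl simp_thms)
  next
    case True
    have runs: "is_proj Y (yhat + (1 / rho1) *\<^sub>R gy_f (xs t) yhat) (ys t)"
      "xt (Suc t) = xs t - gam *\<^sub>R (gx_f (xs t) yhat + blinfun_apply (Hxy (xs t) yhat) (ys t - yhat))"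
      "is_proj X (xt (Suc t)) (xs (Suc t))"
      if "t < T" for t
      using run' that True unfolding alg2_run_def by auto
    define b where "b = rho1 * D\<^sup>2"
    define M where "M = lam + tau1 * D + mu\<^sup>2 / rho1"
    define m where "m = (\<lambda>y z. f z yhat + inner (gy_f z yhat) (y - yhat) - rho1 / 2 * (norm (y - yhat))\<^sup>2)"
    define Psi where "Psi = (\<lambda>z. SUP y\<in>Y. m y z)"
    have b0: "b \<ge> 0" using A2(1) by (simp add: b_def)
    have Nb: "(norm (y - yhat))\<^sup>2 \<le> D\<^sup>2" if "y \<in> Y" for y
      using Dd[OF that yhat] by (intro power_mono) auto
    have mf: "m y z \<le> f z y" if "z \<in> X" "y \<in> Y" for y z
      using absD(1)[OF qy[OF that(1) yhat that(2)]] by (simp add: m_def)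
    have fm: "f z y \<le> m y z + b" if "z \<in> X" "y \<in> Y" for y z
    proof -
      have "rho1 * (norm (y - yhat))\<^sup>2 \<le> rho1 * D\<^sup>2" using Nb[OF that(2)] A2(1) by (intro mult_left_mono) auto
      then show ?thesis using absD(2)[OF qy[OF that(1) yhat that(2)]] by (simp add: m_def b_def)
    qed
    have bm: "bdd_above ((\<lambda>y. m y z) ` Y)" if "z \<in> X" for z
      using mf[OF that] fle[OF that] by (intro bdd_aboveI2[of _ _ "phi z"]) (meson order_trans)
    have mle: "m y z \<le> Psi z" if "z \<in> X" "y \<in> Y" for y z
      unfolding Psi_def by (rule cSUP_upper[OF that(2) bm[OF that(1)]])
    have Psile: "Psi z \<le> B" if "\<And>y. y \<in> Y \<Longrightarrow> m y z \<le> B" for z B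
      unfolding Psi_def by (rule cSUP_least[OF Yne that])
    have Pp: "Psi z \<le> phi z \<and> phi z \<le> Psi z + b" if z: "z \<in> X" for z
    proof
      show "Psi z \<le> phi z" by (rule Psile) (use mf[OF z] fle[OF z] in \<open>meson order_trans\<close>)
      show "phi z \<le> Psi z + b" by (rule phile) (use fm[OF z] mle[OF z] in \<open>smt (verit)\<close>)
    qed
    have Mg: "M * gam \<le> 1"
    proof -
      have "M \<le> 3 * L + mu\<^sup>2 / rho1" using lamL(2) Lpos by (simp add: M_def)
      then have "M * gam \<le> (3 * L + mu\<^sup>2 / rho1) * gam" using gam0 by (intro mult_right_mono) auto
      also have "\<dots> = 1" unfolding gam_def using Lq Lpos q3 by simp
      finally show ?thesis .
    qed
    have hypc: "40000 * L * b \<le> eps\<^sup>2"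
    proof -
      have "min mu (sqrt (L * rho1)) = sqrt (L * rho1)" using True by simp
      then have e1: "200 * sqrt (L * rho1) * D \<le> eps" using small' by simp
      have "0 \<le> 200 * sqrt (L * rho1) * D" using D0 Lpos A2(1) by simp
      then have "(200 * sqrt (L * rho1) * D)\<^sup>2 \<le> eps\<^sup>2" using e1 by (intro power_mono) auto
      moreover have "(200 * sqrt (L * rho1) * D)\<^sup>2 = 40000 * L * b"
        using Lpos A2(1) by (simp add: b_def power_mult_distrib)
      ultimately show ?thesis by simp
    qed
    have step: "xs (Suc t) \<in> X \<and> Psi (xs (Suc t)) \<le> Psi (xs t) - gam * (s t)\<^sup>2 / 2 + 0 * gam * s t \<and>
       (\<exists>g. (moreau_env phi X (2 * L) has_derivative (\<lambda>h. inner g h)) (at (xs t)) \<and>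
         (norm g)\<^sup>2 \<le> 4 * (s t + 0) * norm g + 8 * L * b + 4 * L * gam * (s t)\<^sup>2) \<and> s t \<ge> 0"
      if t: "t < T" for t
    proof -
      define x where "x = xs t"
      define yt where "yt = ys t"
      define G where "G = gx_f x yhat + blinfun_apply (Hxy x yhat) (yt - yhat)"
      have x: "x \<in> X" using Xs t by (simp add: x_def)
      have prY: "is_proj Y (yhat + (1 / rho1) *\<^sub>R gy_f x yhat) yt" using runs(1)[OF t] by (simp add: x_def yt_def)
      have yt: "yt \<in> Y" using prY unfolding is_proj_def by simp
      have xt_eq: "xt (Suc t) = x - gam *\<^sub>R G" using runs(2)[OF t] by (simp add: x_def G_def yt_def)
      have pr: "is_proj X (x - gam *\<^sub>R G) (xs (Suc t))" using runs(3)[OF t] xt_eq by simp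
      have sdef: "s t = sqrt ((norm ((x - gam *\<^sub>R G) - x))\<^sup>2 / gam\<^sup>2 - (norm ((x - gam *\<^sub>R G) - xs (Suc t)))\<^sup>2 / gam\<^sup>2)"
        unfolding s_def alg2_eps_def xt_eq x_def ..
      have sc: "m y x \<le> m yt x - rho1 / 2 * (norm (y - yt))\<^sup>2" if y: "y \<in> Y" for y
      proof -
        define c where "c = yhat + (1 / rho1) *\<^sub>R gy_f x yhat"
        have vi: "inner (c - yt) (y - yt) \<le> 0" unfolding c_def by (rule proj_vi[OF Y(1) prY y])
        have gc: "gy_f x yhat = rho1 *\<^sub>R (c - yhat)" using A2(1) by (simp add: c_def)
        have yy: "y - yhat = (y - yt) + (yt - yhat)" by simp
        have n2: "(norm (y - yhat))\<^sup>2 = (norm (y - yt))\<^sup>2 + 2 * inner (yt - yhat) (y - yt) + (norm (yt - yhat))\<^sup>2"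
        proof -
          have "(norm ((y - yt) + (yt - yhat)))\<^sup>2 = (norm (y - yt))\<^sup>2 + 2 * inner (yt - yhat) (y - yt) + (norm (yt - yhat))\<^sup>2"
            by (rule sqnorm_add)
          moreover have "(y - yt) + (yt - yhat) = y - yhat" by simp
          ultimately show ?thesis by simp
        qed
        have "m y x - m yt x = inner (gy_f x yhat) (y - yt) - rho1 / 2 * ((norm (y - yhat))\<^sup>2 - (norm (yt - yhat))\<^sup>2)"
          by (simp add: m_def inner_diff_right algebra_simps)
        also have "\<dots> = rho1 * inner (c - yt) (y - yt) - rho1 / 2 * (norm (y - yt))\<^sup>2"
          unfolding n2 gc by (simp add: inner_diff_left inner_diff_right algebra_simps)
        also have "\<dots> \<le> - (rho1 / 2 * (norm (y - yt))\<^sup>2)"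
          using vi A2(1) by (simp add: mult_nonneg_nonpos)
        finally show ?thesis by simp
      qed
      have Psix: "Psi x = m yt x"
      proof (rule antisym)
        show "Psi x \<le> m yt x"
        proof (rule Psile)
          fix y assume "y \<in> Y"
          have "0 \<le> rho1 / 2 * (norm (y - yt))\<^sup>2" using A2(1) by simp
          then show "m y x \<le> m yt x" using sc[OF \<open>y \<in> Y\<close>] by linarith
        qed
        show "m yt x \<le> Psi x" by (rule mle[OF x yt])
      qed
      have mq: "\<bar>m y z - m y x - inner (gx_f x yhat + blinfun_apply (Hxy x yhat) (y - yhat)) (z - x)\<bar>
          \<le> (lam + tau1 * norm (y - yhat)) / 2 * (norm (z - x))\<^sup>2" if "z \<in> X" "y \<in> Y" for y z
      proof -
        have eq: "m y z - m y x = (f z yhat + inner (gy_f z yhat) (y - yhat)) - (f x yhat + inner (gy_f x yhat) (y - yhat))"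
          by (simp add: m_def)
        show ?thesis unfolding eq
        using model_quad[where f=f and gx_f=gx_f and gy_f=gy_f and Hxy=Hxy and X=X and Y=Y and yhat=yhat and lam=lam and tau=tau1 and y=y and x=x and x'=z, OF X(1) Y(1) yhat that(2) gx lipx gy[OF _ yhat] Hxy A3(2) A3(1) x that(1)]
          .
      qed
      have up: "Psi z \<le> Psi x + inner G (z - x) + M / 2 * (norm (z - x))\<^sup>2 + 0 * norm (z - x)"
        if z: "z \<in> X" for z
      proof (rule Psile)
        fix y assume y: "y \<in> Y"
        define r where "r = norm (y - yt)"
        define dd where "dd = norm (z - x)"
        have Hd: "blinfun_apply (Hxy x yhat) (y - yhat) = blinfun_apply (Hxy x yhat) (y - yt) + blinfun_apply (Hxy x yhat) (yt - yhat)"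
          by (simp add: blinfun.diff_right)
        have hb: "norm (blinfun_apply (Hxy x yhat) (y - yt)) \<le> mu * r"
          unfolding r_def by (rule Hxy_bound[where gx_f=gx_f and Hxy=Hxy and x=x and Y=Y and yhat=yhat and mu=mu, OF Y(1) yhat y yt Hxy[OF x yhat] lipgy[OF x]])
        have "inner (blinfun_apply (Hxy x yhat) (y - yt)) (z - x) \<le> norm (blinfun_apply (Hxy x yhat) (y - yt)) * dd"
          unfolding dd_def by (rule norm_cauchy_schwarz)
        also have "\<dots> \<le> mu * r * dd" using hb by (intro mult_right_mono) (auto simp: dd_def)
        finally have i1: "inner (blinfun_apply (Hxy x yhat) (y - yt)) (z - x) \<le> mu * r * dd" .
        have young: "mu * r * dd - rho1 / 2 * r\<^sup>2 \<le> mu\<^sup>2 / rho1 / 2 * dd\<^sup>2"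
        proof -
          have "0 \<le> (rho1 * r - mu * dd)\<^sup>2" by simp
          then have "2 * rho1 * (mu * r * dd) \<le> rho1\<^sup>2 * r\<^sup>2 + mu\<^sup>2 * dd\<^sup>2" by (simp add: power2_eq_square algebra_simps)
          then show ?thesis using A2(1) by (simp add: field_simps power2_eq_square)
        qed
        have tq: "(lam + tau1 * norm (y - yhat)) / 2 * dd\<^sup>2 \<le> (lam + tau1 * D) / 2 * dd\<^sup>2"
          using Dd[OF y yhat] A3(1) by (intro mult_right_mono divide_right_mono add_left_mono mult_left_mono) auto
        have m1: "m y z \<le> m y x + inner (gx_f x yhat + blinfun_apply (Hxy x yhat) (y - yhat)) (z - x)
               + (lam + tau1 * norm (y - yhat)) / 2 * dd\<^sup>2"
          using absD(2)[OF mq[OF z y]] by (simp add: dd_def)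
        have ieq: "inner (gx_f x yhat + blinfun_apply (Hxy x yhat) (y - yhat)) (z - x)
            = inner G (z - x) + inner (blinfun_apply (Hxy x yhat) (y - yt)) (z - x)"
          unfolding Hd G_def by (simp add: inner_add_left)
        have Mq: "M / 2 * dd\<^sup>2 = (lam + tau1 * D) / 2 * dd\<^sup>2 + mu\<^sup>2 / rho1 / 2 * dd\<^sup>2"
          by (simp add: M_def algebra_simps)
        have "m y z \<le> Psi x + inner G (z - x) + M / 2 * dd\<^sup>2"
          using m1 ieq i1 young tq sc[OF y] Psix Mq unfolding r_def[symmetric] by linarith
        then show "m y z \<le> Psi x + inner G (z - x) + M / 2 * (norm (z - x))\<^sup>2 + 0 * norm (z - x)"
          by (simp add: dd_def)
      qed
      have lo: "Psi z \<ge> Psi x + inner G (z - x) - L / 2 * (norm (z - x))\<^sup>2 - 0 * norm (z - x)"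
        if z: "z \<in> X" for z
      proof -
        have tq: "(lam + tau1 * norm (yt - yhat)) / 2 * (norm (z - x))\<^sup>2 \<le> L / 2 * (norm (z - x))\<^sup>2"
        proof -
          have "tau1 * norm (yt - yhat) \<le> tau1 * D" using Dd[OF yt yhat] A3(1) by (intro mult_left_mono) auto
          then have "lam + tau1 * norm (yt - yhat) \<le> L" using lamL(2) by linarith
          then show ?thesis by (intro mult_right_mono divide_right_mono) auto
        qed
        have "m yt z \<ge> m yt x + inner G (z - x) - (lam + tau1 * norm (yt - yhat)) / 2 * (norm (z - x))\<^sup>2"
          using absD(1)[OF mq[OF z yt]] by (simp add: G_def)
        then show ?thesis using mle[OF z yt] Psix tq by simp
      qed
      note os = one_step[OF X(1) Xne bddphi wc cL Lpos gam0 Mg order_refl b0 Pp x pr up lo sdef]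
      have "s t \<ge> 0" using step_lemma(1)[OF X(1) x gam0 pr refl] sdef by simp
      then show ?thesis using os unfolding x_def by simp
    qed
    have f1: "\<forall>t<T. s t \<ge> 0" using step by blast
    have f2: "\<forall>t<T. Psi (xs (Suc t)) \<le> Psi (xs t) - gam * (s t)\<^sup>2 / 2 + 0 * gam * s t" using step by blast
    have f3: "\<forall>t<T. \<exists>g. (moreau_env phi X (2 * L) has_derivative (\<lambda>h. inner g h)) (at (xs t)) \<and>
            (norm g)\<^sup>2 \<le> 4 * (s t + 0) * norm g + 8 * L * b + 4 * L * gam * (s t)\<^sup>2" using step by blast
    have f4: "Psi (xs 0) - Psi (xs T) \<le> Dlt + b"
      using runu(1) INFle[OF Xs[OF order_refl]] Pp[OF x0] Pp[OF Xs[OF order_refl]] by (simp add: Dlt_def)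
    have f5: "((0::real) \<le> eps / 200 \<and> b = 0) \<or> ((0::real) = 0 \<and> 40000 * L * b \<le> eps\<^sup>2)" using hypc by simp
    show ?thesis using b0 f1 f2 f3 f4 f5 by (intro exI[of _ Psi] exI[of _ 0] exI[of _ b]) (simp only: order_refl simp_thms)
  qed
  then obtain Psi a b where a: "a \<ge> 0" and b: "b \<ge> 0" and s0: "\<And>t. t < T \<Longrightarrow> s t \<ge> 0"
    and hyp: "(a \<le> eps / 200 \<and> b = 0) \<or> (a = 0 \<and> 40000 * L * b \<le> eps\<^sup>2)"
    and desc: "\<And>t. t < T \<Longrightarrow> Psi (xs (Suc t)) \<le> Psi (xs t) - gam * (s t)\<^sup>2 / 2 + a * gam * s t"
    and tot: "Psi (xs 0) - Psi (xs T) \<le> Dlt + b"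
    and env: "\<And>t. t < T \<Longrightarrow> \<exists>g. (moreau_env phi X (2 * L) has_derivative (\<lambda>h. inner g h)) (at (xs t)) \<and>
            (norm g)\<^sup>2 \<le> 4 * (s t + a) * norm g + 8 * L * b + 4 * L * gam * (s t)\<^sup>2"
    by blast
  obtain t1 where t1: "t1 < T" "\<And>t. t < T \<Longrightarrow> s t1 \<le> s t"
  proof -
    have fin: "finite (s ` {..<T})" "s ` {..<T} \<noteq> {}" using Tpos by auto
    have "Min (s ` {..<T}) \<in> s ` {..<T}" by (rule Min_in[OF fin])
    then obtain t1 where "t1 < T" "s t1 = Min (s ` {..<T})" by (metis imageE lessThan_iff)
    moreover have "\<And>t. t < T \<Longrightarrow> Min (s ` {..<T}) \<le> s t" using fin by auto
    ultimately show ?thesis using that by auto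
  qed
  define t0 where "t0 = (LEAST t. t < T \<and> (\<forall>s<T. alg2_eps gam xs xt t \<le> alg2_eps gam xs xt s))"
  have t0: "t0 < T \<and> (\<forall>s<T. alg2_eps gam xs xt t0 \<le> alg2_eps gam xs xt s)"
    unfolding t0_def by (rule LeastI[of _ t1]) (use t1 in \<open>auto simp: s_def\<close>)
  have out: "alg2_output gam T xs xt = xs t0"
    unfolding alg2_output_def t0_def using Tpos by simp
  have st0: "s t0 \<le> eps / 6"
    by (rule finish_small[OF gam0 Lpos gL a b eps_pos hyp TG Dlt0, where Psi="\<lambda>t. Psi (xs t)"])
       (use desc tot t0 in \<open>auto simp: s_def\<close>)
  obtain g where g: "(moreau_env phi X (2 * L) has_derivative (\<lambda>h. inner g h)) (at (xs t0))"
    "(norm g)\<^sup>2 \<le> 4 * (s t0 + a) * norm g + 8 * L * b + 4 * L * gam * (s t0)\<^sup>2"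
    using env t0 by blast
  have "norm g \<le> eps"
    by (rule finish_grad[OF gam0 Lpos gL a b eps_pos hyp s0[OF conjunct1[OF t0]] st0 norm_ge_zero g(2)])
  moreover have "xs t0 \<in> X" using Xs t0 by simp
  ultimately show ?thesis
    unfolding out[unfolded gam_def L_def] using g(1) unfolding phi_def L_def by blast
qed


end
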